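(* Let $0<\varepsilon<1$ and $C\ge1$. Let $V_1,\dots,V_5$ be probability spaces, with indices taken mod $5$. For each $i$, let $f_{i,i+1},g_{i,i+1}\colon V_i\times V_{i+1}\to[0,\infty)$ be measurable with $0\le g_{i,i+1}\le1$ pointwise and $\|f_{i,i+1}-g_{i,i+1}\|_\square\le\varepsilon^4$, and suppose that for each $i$, $$\|f_{i-1,i}\circ f_{i,i+1}\|_2^2\le C.$$ Then $$\mathbb E_{x_1,\dots,x_5}\prod_{i=1}^5 f_{i,i+1}(x_i,x_{i+1})\ \ge\ \mathbb E_{x_1,\dots,x_5}\prod_{i=1}^5 g_{i,i+1}(x_i,x_{i+1})-11C\varepsilon.$$
   Context: Here $x_i$ ranges over $V_i$ independently according to its probability measure. The convention $f_{ji}(x_j,x_i)=f_{ij}(x_i,x_j)$ (and likewise for $g$) is used, so e.g. $f_{i-1,i}$ is regarded as a function on $V_{i-1}\times V_i$. For $h_{12}\colon V_1\times V_2\to\mathbb R$ and $h_{23}\colon V_2\times V_3\to\mathbb R$, the composition $h_{12}\circ h_{23}\colon V_1\times V_3\to\mathbb R$ is $(h_{12}\circ h_{23})(x_1,x_3)=\mathbb E_{x_2\in V_2}h_{12}(x_1,x_2)h_{23}(x_2,x_3)$; $\|\cdot\|_2$ is the $L^2$ norm on $V_{i-1}\times V_{i+1}$ with the product probability measure. The cut norm of $h\colon V\times W\to\mathbb R$ is $\|h\|_\square=\sup_{A\subseteq V,B\subseteq W}|\mathbb E_{x\in V,y\in W}h(x,y)1_A(x)1_B(y)|$ over measurable $A,B$.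 *)

theory Defs
  imports "HOL-Probability.Probability"
begin

definition rect_integral ::
  "'a measure \<Rightarrow> 'b measure \<Rightarrow> ('a \<Rightarrow> 'b \<Rightarrow> real) \<Rightarrow> 'a set \<Rightarrow> 'b set \<Rightarrow> ereal" where
  "rect_integral M N h A B =
     enn2ereal (\<integral>\<^sup>+ z. ennreal (h (fst z) (snd z) * indicator A (fst z) * indicator B (snd z)) \<partial>(M \<Otimes>\<^sub>M N))
   - enn2ereal (\<integral>\<^sup>+ z. ennreal (- (h (fst z) (snd z) * indicator A (fst z) * indicator B (snd z))) \<partial>(M \<Otimes>\<^sub>M N))"

definition cut_norm ::
  "'a measure \<Rightarrow> 'b measure \<Rightarrow> ('a \<Rightarrow> 'b \<Rightarrow> real) \<Rightarrow> ereal" where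
  "cut_norm M N h = (SUP AB \<in> sets M \<times> sets N. \<bar>rect_integral M N h (fst AB) (snd AB)\<bar>)"

definition comp_sq_norm ::
  "'a measure \<Rightarrow> 'b measure \<Rightarrow> 'c measure \<Rightarrow> ('a \<Rightarrow> 'b \<Rightarrow> real) \<Rightarrow> ('b \<Rightarrow> 'c \<Rightarrow> real) \<Rightarrow> ennreal" where
  "comp_sq_norm M1 M2 M3 h1 h2 =
     (\<integral>\<^sup>+ xz. (\<integral>\<^sup>+ y. ennreal (h1 (fst xz) y * h2 y (snd xz)) \<partial>M2)\<^sup>2 \<partial>(M1 \<Otimes>\<^sub>M M3))"

definition good_pair ::
  "'a measure \<Rightarrow> 'b measure \<Rightarrow> ('a \<Rightarrow> 'b \<Rightarrow> real) \<Rightarrow> ('a \<Rightarrow> 'b \<Rightarrow> real) \<Rightarrow> real \<Rightarrow> bool" where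
  "good_pair M N f g \<epsilon> \<longleftrightarrow>
     case_prod f \<in> borel_measurable (M \<Otimes>\<^sub>M N) \<and> case_prod g \<in> borel_measurable (M \<Otimes>\<^sub>M N) \<and>
     (\<forall>x\<in>space M. \<forall>y\<in>space N. 0 \<le> f x y \<and> 0 \<le> g x y \<and> g x y \<le> 1) \<and>
     cut_norm M N (\<lambda>x y. f x y - g x y) \<le> ereal (\<epsilon> ^ 4)"

end

theory Submission
  imports Defs
begin



lemma nn_swap:
  assumes "sigma_finite_measure M" "sigma_finite_measure N"
    and "(\<lambda>(x,y). f x y) \<in> borel_measurable (M \<Otimes>\<^sub>M N)"
  shows "(\<integral>\<^sup>+x. \<integral>\<^sup>+y. f x y \<partial>N \<partial>M) = (\<integral>\<^sup>+y. \<integral>\<^sup>+x. f x y \<partial>M \<partial>N)"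
proof -
  interpret pair_sigma_finite M N using assms(1,2) by (simp add: pair_sigma_finite_def)
  show ?thesis using Fubini'[OF assms(3)] by simp
qed

definition cyc :: "'a measure \<Rightarrow> 'b measure \<Rightarrow> 'c measure \<Rightarrow> 'd measure \<Rightarrow> 'e measure \<Rightarrow>
  ('a\<Rightarrow>'b\<Rightarrow>ennreal) \<Rightarrow> ('b\<Rightarrow>'c\<Rightarrow>ennreal) \<Rightarrow> ('c\<Rightarrow>'d\<Rightarrow>ennreal) \<Rightarrow> ('d\<Rightarrow>'e\<Rightarrow>ennreal) \<Rightarrow> ('e\<Rightarrow>'a\<Rightarrow>ennreal) \<Rightarrow> ennreal" where
  "cyc M1 M2 M3 M4 M5 p q r s t = (\<integral>\<^sup>+x1. \<integral>\<^sup>+x2. \<integral>\<^sup>+x3. \<integral>\<^sup>+x4. \<integral>\<^sup>+x5.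
      p x1 x2 * q x2 x3 * r x3 x4 * s x4 x5 * t x5 x1 \<partial>M5 \<partial>M4 \<partial>M3 \<partial>M2 \<partial>M1)"

locale five =
  fixes M1 :: "'a measure" and M2 :: "'b measure" and M3 :: "'c measure"
    and M4 :: "'d measure" and M5 :: "'e measure"
  assumes P1: "prob_space M1" and P2: "prob_space M2" and P3: "prob_space M3"
    and P4: "prob_space M4" and P5: "prob_space M5"
begin
lemma S1: "sigma_finite_measure M1" using P1 by (simp add: prob_space_imp_sigma_finite)
lemma S2: "sigma_finite_measure M2" using P2 by (simp add: prob_space_imp_sigma_finite)
lemma S3: "sigma_finite_measure M3" using P3 by (simp add: prob_space_imp_sigma_finite)
lemma S4: "sigma_finite_measure M4" using P4 by (simp add: prob_space_imp_sigma_finite)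
lemma S5: "sigma_finite_measure M5" using P5 by (simp add: prob_space_imp_sigma_finite)

lemma rot:
  assumes [measurable]: "case_prod p \<in> borel_measurable (M1 \<Otimes>\<^sub>M M2)"
    "case_prod q \<in> borel_measurable (M2 \<Otimes>\<^sub>M M3)"
    "case_prod r \<in> borel_measurable (M3 \<Otimes>\<^sub>M M4)"
    "case_prod s \<in> borel_measurable (M4 \<Otimes>\<^sub>M M5)"
    "case_prod t \<in> borel_measurable (M5 \<Otimes>\<^sub>M M1)"
  shows "cyc M1 M2 M3 M4 M5 p q r s t = cyc M2 M3 M4 M5 M1 q r s t p"
proof -
  interpret A: sigma_finite_measure M1 by (rule S1)
  interpret B: sigma_finite_measure M2 by (rule S2)
  interpret C: sigma_finite_measure M3 by (rule S3)
  interpret D: sigma_finite_measure M4 by (rule S4)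
  interpret E: sigma_finite_measure M5 by (rule S5)
  have "cyc M1 M2 M3 M4 M5 p q r s t = (\<integral>\<^sup>+x2. \<integral>\<^sup>+x1. \<integral>\<^sup>+x3. \<integral>\<^sup>+x4. \<integral>\<^sup>+x5.
      p x1 x2 * q x2 x3 * r x3 x4 * s x4 x5 * t x5 x1 \<partial>M5 \<partial>M4 \<partial>M3 \<partial>M1 \<partial>M2)"
    unfolding cyc_def by (rule nn_swap[OF S1 S2]) measurable
  also have "\<dots> = (\<integral>\<^sup>+x2. \<integral>\<^sup>+x3. \<integral>\<^sup>+x1. \<integral>\<^sup>+x4. \<integral>\<^sup>+x5.
      p x1 x2 * q x2 x3 * r x3 x4 * s x4 x5 * t x5 x1 \<partial>M5 \<partial>M4 \<partial>M1 \<partial>M3 \<partial>M2)"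
    by (intro nn_integral_cong nn_swap[OF S1 S3]) measurable
  also have "\<dots> = (\<integral>\<^sup>+x2. \<integral>\<^sup>+x3. \<integral>\<^sup>+x4. \<integral>\<^sup>+x1. \<integral>\<^sup>+x5.
      p x1 x2 * q x2 x3 * r x3 x4 * s x4 x5 * t x5 x1 \<partial>M5 \<partial>M1 \<partial>M4 \<partial>M3 \<partial>M2)"
    by (intro nn_integral_cong nn_swap[OF S1 S4]) measurable
  also have "\<dots> = (\<integral>\<^sup>+x2. \<integral>\<^sup>+x3. \<integral>\<^sup>+x4. \<integral>\<^sup>+x5. \<integral>\<^sup>+x1.
      p x1 x2 * q x2 x3 * r x3 x4 * s x4 x5 * t x5 x1 \<partial>M1 \<partial>M5 \<partial>M4 \<partial>M3 \<partial>M2)"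
    by (intro nn_integral_cong nn_swap[OF S1 S5]) measurable
  also have "\<dots> = cyc M2 M3 M4 M5 M1 q r s t p"
    unfolding cyc_def by (intro nn_integral_cong) (simp add: ac_simps)
  finally show ?thesis .
qed

lemma group:
  assumes [measurable]: "case_prod p \<in> borel_measurable (M1 \<Otimes>\<^sub>M M2)"
    "case_prod q \<in> borel_measurable (M2 \<Otimes>\<^sub>M M3)"
    "case_prod r \<in> borel_measurable (M3 \<Otimes>\<^sub>M M4)"
    "case_prod s \<in> borel_measurable (M4 \<Otimes>\<^sub>M M5)"
    "case_prod t \<in> borel_measurable (M5 \<Otimes>\<^sub>M M1)"
  shows "cyc M1 M2 M3 M4 M5 p q r s t = (\<integral>\<^sup>+x4. \<integral>\<^sup>+x1. \<integral>\<^sup>+x2.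
     p x1 x2 * (\<integral>\<^sup>+x5. s x4 x5 * t x5 x1 \<partial>M5) * (\<integral>\<^sup>+x3. q x2 x3 * r x3 x4 \<partial>M3) \<partial>M2 \<partial>M1 \<partial>M4)"
proof -
  interpret A: sigma_finite_measure M1 by (rule S1)
  interpret B: sigma_finite_measure M2 by (rule S2)
  interpret C: sigma_finite_measure M3 by (rule S3)
  interpret D: sigma_finite_measure M4 by (rule S4)
  interpret E: sigma_finite_measure M5 by (rule S5)
  define a where "a x4 x1 = (\<integral>\<^sup>+x5. s x4 x5 * t x5 x1 \<partial>M5)" for x4 x1
  have [measurable]: "case_prod a \<in> borel_measurable (M4 \<Otimes>\<^sub>M M1)"
    unfolding a_def by measurable
  have "cyc M1 M2 M3 M4 M5 p q r s t = (\<integral>\<^sup>+x1. \<integral>\<^sup>+x2. \<integral>\<^sup>+x3. \<integral>\<^sup>+x4.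
      p x1 x2 * q x2 x3 * r x3 x4 * a x4 x1 \<partial>M4 \<partial>M3 \<partial>M2 \<partial>M1)"
    unfolding cyc_def a_def
    by (intro nn_integral_cong, subst nn_integral_cmult[symmetric]) (measurable, simp add: mult.assoc)
  also have "\<dots> = (\<integral>\<^sup>+x1. \<integral>\<^sup>+x2. \<integral>\<^sup>+x4. \<integral>\<^sup>+x3.
      p x1 x2 * q x2 x3 * r x3 x4 * a x4 x1 \<partial>M3 \<partial>M4 \<partial>M2 \<partial>M1)"
    by (intro nn_integral_cong nn_swap[OF S3 S4]) measurable
  also have "\<dots> = (\<integral>\<^sup>+x1. \<integral>\<^sup>+x4. \<integral>\<^sup>+x2. \<integral>\<^sup>+x3.
      p x1 x2 * q x2 x3 * r x3 x4 * a x4 x1 \<partial>M3 \<partial>M2 \<partial>M4 \<partial>M1)"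
    by (intro nn_integral_cong nn_swap[OF S2 S4]) measurable
  also have "\<dots> = (\<integral>\<^sup>+x4. \<integral>\<^sup>+x1. \<integral>\<^sup>+x2. \<integral>\<^sup>+x3.
      p x1 x2 * q x2 x3 * r x3 x4 * a x4 x1 \<partial>M3 \<partial>M2 \<partial>M1 \<partial>M4)"
    by (intro nn_integral_cong nn_swap[OF S1 S4]) measurable
  also have "\<dots> = (\<integral>\<^sup>+x4. \<integral>\<^sup>+x1. \<integral>\<^sup>+x2.
     p x1 x2 * a x4 x1 * (\<integral>\<^sup>+x3. q x2 x3 * r x3 x4 \<partial>M3) \<partial>M2 \<partial>M1 \<partial>M4)"
    by (intro nn_integral_cong, subst nn_integral_cmult[symmetric]) (measurable, simp add: ac_simps)
  finally show ?thesis unfolding a_def .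
qed
end



lemma cut_bound:
  fixes M :: "'a measure" and N :: "'b measure"
  assumes PM: "prob_space M" and PN: "prob_space N" and gp: "good_pair M N f g e"
    and A: "A \<in> sets M" and B: "B \<in> sets N"
  shows "(\<integral>\<^sup>+x. \<integral>\<^sup>+y. ennreal (g x y) * indicator A x * indicator B y \<partial>N \<partial>M)
          \<le> (\<integral>\<^sup>+x. \<integral>\<^sup>+y. ennreal (f x y) * indicator A x * indicator B y \<partial>N \<partial>M) + ennreal (e^4)"
    and "(\<integral>\<^sup>+x. \<integral>\<^sup>+y. ennreal (f x y) * indicator A x * indicator B y \<partial>N \<partial>M)
          \<le> (\<integral>\<^sup>+x. \<integral>\<^sup>+y. ennreal (g x y) * indicator A x * indicator B y \<partial>N \<partial>M) + ennreal (e^4)"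
proof -
  interpret N: prob_space N by (rule PN)
  interpret MN: prob_space "M \<Otimes>\<^sub>M N" by (rule prob_space_pair[OF PM PN])
  have mf[measurable]: "case_prod f \<in> borel_measurable (M \<Otimes>\<^sub>M N)"
    and mg[measurable]: "case_prod g \<in> borel_measurable (M \<Otimes>\<^sub>M N)"
    and nn: "\<And>x y. x \<in> space M \<Longrightarrow> y \<in> space N \<Longrightarrow> 0 \<le> f x y \<and> 0 \<le> g x y \<and> g x y \<le> 1"
    and cn: "cut_norm M N (\<lambda>x y. f x y - g x y) \<le> ereal (e ^ 4)"
    using gp unfolding good_pair_def by auto
  have [measurable]: "A \<in> sets M" "B \<in> sets N" using A B by auto
  define h where "h z = (f (fst z) (snd z) - g (fst z) (snd z)) * indicator A (fst z) * indicator B (snd z)" for z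
  have [measurable]: "h \<in> borel_measurable (M \<Otimes>\<^sub>M N)" unfolding h_def by measurable
  define P where "P = (\<integral>\<^sup>+z. ennreal (h z) \<partial>(M \<Otimes>\<^sub>M N))"
  define Q where "Q = (\<integral>\<^sup>+z. ennreal (- h z) \<partial>(M \<Otimes>\<^sub>M N))"
  define Gi where "Gi = (\<integral>\<^sup>+z. ennreal (g (fst z) (snd z)) * indicator A (fst z) * indicator B (snd z) \<partial>(M \<Otimes>\<^sub>M N))"
  define Fi where "Fi = (\<integral>\<^sup>+z. ennreal (f (fst z) (snd z)) * indicator A (fst z) * indicator B (snd z) \<partial>(M \<Otimes>\<^sub>M N))"
  have rect: "rect_integral M N (\<lambda>x y. f x y - g x y) A B = enn2ereal P - enn2ereal Q"
    unfolding rect_integral_def P_def Q_def h_def by simp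
  have "\<bar>rect_integral M N (\<lambda>x y. f x y - g x y) A B\<bar> \<le> cut_norm M N (\<lambda>x y. f x y - g x y)"
    unfolding cut_norm_def by (rule SUP_upper2[where i="(A,B)"]) (auto simp: A B)
  with cn rect have absle: "\<bar>enn2ereal P - enn2ereal Q\<bar> \<le> ereal (e ^ 4)" by simp
  have pw: "ennreal (g (fst z) (snd z)) * indicator A (fst z) * indicator B (snd z) + ennreal (h z)
      = ennreal (f (fst z) (snd z)) * indicator A (fst z) * indicator B (snd z) + ennreal (- h z)"
    if zs: "z \<in> space (M \<Otimes>\<^sub>M N)" for z
  proof -
    obtain x y where z: "z = (x,y)" "x \<in> space M" "y \<in> space N" using zs
      by (cases z) (auto simp: space_pair_measure)
    have "ennreal (g x y) + ennreal (f x y - g x y) = ennreal (f x y) + ennreal (g x y - f x y)"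
      using nn[OF z(2,3)]
      by (cases "f x y \<le> g x y") (auto simp: ennreal_plus[symmetric] ennreal_neg)
    then show ?thesis unfolding h_def z by (auto split: split_indicator)
  qed
  have eq: "Gi + P = Fi + Q"
    unfolding Gi_def P_def Fi_def Q_def
    by (subst (1 2) nn_integral_add[symmetric]) (measurable, auto intro!: nn_integral_cong pw)
  have "Q \<le> (\<integral>\<^sup>+z. 1 \<partial>(M \<Otimes>\<^sub>M N))"
    unfolding Q_def
  proof (intro nn_integral_mono)
    fix z assume "z \<in> space (M \<Otimes>\<^sub>M N)"
    then obtain x y where z: "z = (x,y)" "x \<in> space M" "y \<in> space N"
      by (cases z) (auto simp: space_pair_measure)
    show "ennreal (- h z) \<le> 1" using nn[OF z(2,3)] unfolding h_def z
      by (auto split: split_indicator)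
  qed
  also have "\<dots> = 1" by (simp add: MN.emeasure_space_1)
  finally have Q1: "Q \<le> 1" .
  then obtain q where q: "Q = ennreal q" "0 \<le> q"
    by (cases Q rule: ennreal_cases) (auto simp: top_unique)
  have "P \<noteq> top"
  proof
    assume "P = top"
    then have "enn2ereal P - enn2ereal Q = \<infinity>" using q by simp
    with absle show False by simp
  qed
  then obtain p where p: "P = ennreal p" "0 \<le> p"
    by (cases P rule: ennreal_cases) auto
  have pq: "\<bar>p - q\<bar> \<le> e ^ 4" using absle p q by simp
  have "P + Gi = Fi + Q" using eq by (simp add: ac_simps)
  also have "\<dots> \<le> Fi + (P + ennreal (e^4))"
    using pq p q by (intro add_mono order.refl) (simp add: ennreal_plus[symmetric] del: ennreal_plus)
  finally have G1: "Gi \<le> Fi + ennreal (e^4)"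
    using p by (simp add: ac_simps ennreal_add_left_cancel_le)
  have "Q + Fi = Gi + P" using eq by (simp add: ac_simps)
  also have "\<dots> \<le> Gi + (Q + ennreal (e^4))"
    using pq p q by (intro add_mono order.refl) (simp add: ennreal_plus[symmetric] del: ennreal_plus)
  finally have F1: "Fi \<le> Gi + ennreal (e^4)"
    using q by (simp add: ac_simps ennreal_add_left_cancel_le)
  have iG: "(\<integral>\<^sup>+x. \<integral>\<^sup>+y. ennreal (g x y) * indicator A x * indicator B y \<partial>N \<partial>M) = Gi"
    unfolding Gi_def
    by (rule N.nn_integral_fst[where f="\<lambda>z. ennreal (g (fst z) (snd z)) * indicator A (fst z) * indicator B (snd z)", simplified]) measurable
  have iF: "(\<integral>\<^sup>+x. \<integral>\<^sup>+y. ennreal (f x y) * indicator A x * indicator B y \<partial>N \<partial>M) = Fi"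
    unfolding Fi_def
    by (rule N.nn_integral_fst[where f="\<lambda>z. ennreal (f (fst z) (snd z)) * indicator A (fst z) * indicator B (snd z)", simplified]) measurable
  show "(\<integral>\<^sup>+x. \<integral>\<^sup>+y. ennreal (g x y) * indicator A x * indicator B y \<partial>N \<partial>M)
          \<le> (\<integral>\<^sup>+x. \<integral>\<^sup>+y. ennreal (f x y) * indicator A x * indicator B y \<partial>N \<partial>M) + ennreal (e^4)"
    using G1 iG iF by simp
  show "(\<integral>\<^sup>+x. \<integral>\<^sup>+y. ennreal (f x y) * indicator A x * indicator B y \<partial>N \<partial>M)
          \<le> (\<integral>\<^sup>+x. \<integral>\<^sup>+y. ennreal (g x y) * indicator A x * indicator B y \<partial>N \<partial>M) + ennreal (e^4)"
    using F1 iG iF by simp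
qed



lemma layer:
  fixes u :: "'a \<Rightarrow> real"
  assumes [measurable]: "u \<in> borel_measurable M" and x: "x \<in> space M"
    and "0 \<le> u x" "u x \<le> \<alpha>"
  shows "ennreal (u x) = (\<integral>\<^sup>+s. indicator {0..<\<alpha>} s * (if s < u x then 1 else 0) \<partial>lborel)"
proof -
  have "(\<integral>\<^sup>+s. indicator {0..<\<alpha>} s * (if s < u x then 1 else 0) \<partial>lborel)
      = (\<integral>\<^sup>+s. indicator {0..<u x} s \<partial>lborel)"
    using assms by (intro nn_integral_cong) (auto split: split_indicator)
  also have "\<dots> = ennreal (u x)" using assms by simp
  finally show ?thesis by simp
qed

lemma expand:
  fixes M :: "'a measure" and N :: "'b measure" and u :: "'a \<Rightarrow> real" and v :: "'b \<Rightarrow> real"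
  assumes SM: "sigma_finite_measure M" and SN: "sigma_finite_measure N"
    and [measurable]: "case_prod k \<in> borel_measurable (M \<Otimes>\<^sub>M N)"
    and [measurable]: "u \<in> borel_measurable M" "v \<in> borel_measurable N"
    and u: "\<And>x. x \<in> space M \<Longrightarrow> 0 \<le> u x \<and> u x \<le> \<alpha>"
    and v: "\<And>y. y \<in> space N \<Longrightarrow> 0 \<le> v y \<and> v y \<le> \<beta>"
  shows "(\<integral>\<^sup>+x. \<integral>\<^sup>+y. k x y * ennreal (u x) * ennreal (v y) \<partial>N \<partial>M)
    = (\<integral>\<^sup>+s. \<integral>\<^sup>+t. indicator {0..<\<alpha>} s * indicator {0..<\<beta>} t *
         (\<integral>\<^sup>+x. \<integral>\<^sup>+y. k x y * (if s < u x then 1 else 0) * (if t < v y then 1 else 0) \<partial>N \<partial>M) \<partial>lborel \<partial>lborel)"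
proof -
  have SL: "sigma_finite_measure (lborel :: real measure)" by (rule lborel.sigma_finite_measure_axioms)
  interpret L: sigma_finite_measure "lborel :: real measure" by (rule SL)
  interpret A: sigma_finite_measure M by (rule SM)
  interpret B: sigma_finite_measure N by (rule SN)
  have "(\<integral>\<^sup>+x. \<integral>\<^sup>+y. k x y * ennreal (u x) * ennreal (v y) \<partial>N \<partial>M)
     = (\<integral>\<^sup>+x. \<integral>\<^sup>+y. \<integral>\<^sup>+s. \<integral>\<^sup>+t. k x y * (indicator {0..<\<alpha>} s * (if s < u x then 1 else 0))
          * (indicator {0..<\<beta>} t * (if t < v y then 1 else 0)) \<partial>lborel \<partial>lborel \<partial>N \<partial>M)"
  proof (intro nn_integral_cong)
    fix x y assume x: "x \<in> space M" and y: "y \<in> space N"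
    show "k x y * ennreal (u x) * ennreal (v y) = (\<integral>\<^sup>+s. \<integral>\<^sup>+t. k x y * (indicator {0..<\<alpha>} s * (if s < u x then 1 else 0))
          * (indicator {0..<\<beta>} t * (if t < v y then 1 else 0)) \<partial>lborel \<partial>lborel)"
      apply (subst layer[of u M x \<alpha>], (use x u in auto)[4])
      apply (subst layer[of v N y \<beta>], (use y v in auto)[4])
      apply (subst nn_integral_cmult[symmetric], measurable)
      apply (subst nn_integral_multc[symmetric], measurable)
      apply (intro nn_integral_cong)
      apply (subst nn_integral_cmult[symmetric], measurable)
      done
  qed
  also have "\<dots> = (\<integral>\<^sup>+x. \<integral>\<^sup>+s. \<integral>\<^sup>+y. \<integral>\<^sup>+t. k x y * (indicator {0..<\<alpha>} s * (if s < u x then 1 else 0))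
          * (indicator {0..<\<beta>} t * (if t < v y then 1 else 0)) \<partial>lborel \<partial>N \<partial>lborel \<partial>M)"
    by (intro nn_integral_cong nn_swap[OF SN SL]) measurable
  also have "\<dots> = (\<integral>\<^sup>+x. \<integral>\<^sup>+s. \<integral>\<^sup>+t. \<integral>\<^sup>+y. k x y * (indicator {0..<\<alpha>} s * (if s < u x then 1 else 0))
          * (indicator {0..<\<beta>} t * (if t < v y then 1 else 0)) \<partial>N \<partial>lborel \<partial>lborel \<partial>M)"
    by (intro nn_integral_cong nn_swap[OF SN SL]) measurable
  also have "\<dots> = (\<integral>\<^sup>+s. \<integral>\<^sup>+x. \<integral>\<^sup>+t. \<integral>\<^sup>+y. k x y * (indicator {0..<\<alpha>} s * (if s < u x then 1 else 0))
          * (indicator {0..<\<beta>} t * (if t < v y then 1 else 0)) \<partial>N \<partial>lborel \<partial>M \<partial>lborel)"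
    by (intro nn_integral_cong nn_swap[OF SM SL]) measurable
  also have "\<dots> = (\<integral>\<^sup>+s. \<integral>\<^sup>+t. \<integral>\<^sup>+x. \<integral>\<^sup>+y. k x y * (indicator {0..<\<alpha>} s * (if s < u x then 1 else 0))
          * (indicator {0..<\<beta>} t * (if t < v y then 1 else 0)) \<partial>N \<partial>M \<partial>lborel \<partial>lborel)"
    by (intro nn_integral_cong nn_swap[OF SM SL]) measurable
  also have "\<dots> = (\<integral>\<^sup>+s. \<integral>\<^sup>+t. indicator {0..<\<alpha>} s * indicator {0..<\<beta>} t *
         (\<integral>\<^sup>+x. \<integral>\<^sup>+y. k x y * (if s < u x then 1 else 0) * (if t < v y then 1 else 0) \<partial>N \<partial>M) \<partial>lborel \<partial>lborel)"
    apply (intro nn_integral_cong)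
    apply (subst nn_integral_cmult[symmetric], measurable)
    apply (intro nn_integral_cong)
    apply (subst nn_integral_cmult[symmetric], measurable)
    apply (simp add: ac_simps)
    done
  finally show ?thesis .
qed



lemma core:
  fixes M :: "'a measure" and N :: "'b measure" and u :: "'a \<Rightarrow> real" and v :: "'b \<Rightarrow> real"
  assumes PM: "prob_space M" and PN: "prob_space N" and gp: "good_pair M N f g e"
    and [measurable]: "u \<in> borel_measurable M" "v \<in> borel_measurable N"
    and u: "\<And>x. x \<in> space M \<Longrightarrow> 0 \<le> u x \<and> u x \<le> \<alpha>"
    and v: "\<And>y. y \<in> space N \<Longrightarrow> 0 \<le> v y \<and> v y \<le> \<beta>"
    and ab: "0 \<le> \<alpha>" "0 \<le> \<beta>"
  shows "(\<integral>\<^sup>+x. \<integral>\<^sup>+y. ennreal (g x y) * ennreal (u x) * ennreal (v y) \<partial>N \<partial>M)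
     \<le> (\<integral>\<^sup>+x. \<integral>\<^sup>+y. ennreal (f x y) * ennreal (u x) * ennreal (v y) \<partial>N \<partial>M) + ennreal (\<alpha> * \<beta> * e^4)"
proof -
  have SM: "sigma_finite_measure M" using PM by (simp add: prob_space_imp_sigma_finite)
  have SN: "sigma_finite_measure N" using PN by (simp add: prob_space_imp_sigma_finite)
  interpret A: sigma_finite_measure M by (rule SM)
  interpret B: sigma_finite_measure N by (rule SN)
  have [measurable]: "case_prod f \<in> borel_measurable (M \<Otimes>\<^sub>M N)"
    "case_prod g \<in> borel_measurable (M \<Otimes>\<^sub>M N)"
    using gp unfolding good_pair_def by auto
  define W where "W s t = (indicator {0..<\<alpha>} s * indicator {0..<\<beta>} t :: ennreal)" for s t :: real
  have [measurable]: "case_prod W \<in> borel_measurable (lborel \<Otimes>\<^sub>M lborel)" unfolding W_def by measurable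
  define I where "I h s t = (\<integral>\<^sup>+x. \<integral>\<^sup>+y. ennreal (h x y) * (if s < u x then 1 else 0) * (if t < v y then 1 else 0) \<partial>N \<partial>M)"
    for h :: "'a \<Rightarrow> 'b \<Rightarrow> real" and s t
  have mI: "case_prod (I h) \<in> borel_measurable (lborel \<Otimes>\<^sub>M lborel)"
    if [measurable]: "case_prod h \<in> borel_measurable (M \<Otimes>\<^sub>M N)" for h
    unfolding I_def by measurable
  have [measurable]: "case_prod (I f) \<in> borel_measurable (lborel \<Otimes>\<^sub>M lborel)"
    by (rule mI) measurable
  have [measurable]: "case_prod (I g) \<in> borel_measurable (lborel \<Otimes>\<^sub>M lborel)"
    by (rule mI) measurable
  have eg: "(\<integral>\<^sup>+x. \<integral>\<^sup>+y. ennreal (g x y) * ennreal (u x) * ennreal (v y) \<partial>N \<partial>M)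
      = (\<integral>\<^sup>+s. \<integral>\<^sup>+t. W s t * I g s t \<partial>lborel \<partial>lborel)"
    unfolding W_def I_def by (rule expand[OF SM SN _ _ _ u v]) measurable
  have ef: "(\<integral>\<^sup>+x. \<integral>\<^sup>+y. ennreal (f x y) * ennreal (u x) * ennreal (v y) \<partial>N \<partial>M)
      = (\<integral>\<^sup>+s. \<integral>\<^sup>+t. W s t * I f s t \<partial>lborel \<partial>lborel)"
    unfolding W_def I_def by (rule expand[OF SM SN _ _ _ u v]) measurable
  have pt: "I g s t \<le> I f s t + ennreal (e^4)" for s t
  proof -
    define As where "As = {x \<in> space M. s < u x}"
    define Bt where "Bt = {y \<in> space N. t < v y}"
    have [measurable]: "As \<in> sets M" "Bt \<in> sets N" unfolding As_def Bt_def by measurable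
    have conv: "I h s t = (\<integral>\<^sup>+x. \<integral>\<^sup>+y. ennreal (h x y) * indicator As x * indicator Bt y \<partial>N \<partial>M)" for h
      unfolding I_def As_def Bt_def
      by (intro nn_integral_cong) (auto split: split_indicator)
    show ?thesis unfolding conv by (rule cut_bound(1)[OF PM PN gp]) measurable
  qed
  have "(\<integral>\<^sup>+s. \<integral>\<^sup>+t. W s t * I g s t \<partial>lborel \<partial>lborel)
      \<le> (\<integral>\<^sup>+s. \<integral>\<^sup>+t. W s t * I f s t + W s t * ennreal (e^4) \<partial>lborel \<partial>lborel)"
  proof (intro nn_integral_mono)
    fix s t
    have "W s t * I g s t \<le> W s t * (I f s t + ennreal (e^4))" by (rule mult_left_mono[OF pt]) simp
    then show "W s t * I g s t \<le> W s t * I f s t + W s t * ennreal (e^4)" by (simp only: distrib_left)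
  qed
  also have "\<dots> = (\<integral>\<^sup>+s. \<integral>\<^sup>+t. W s t * I f s t \<partial>lborel \<partial>lborel) + (\<integral>\<^sup>+s. \<integral>\<^sup>+t. W s t * ennreal (e^4) \<partial>lborel \<partial>lborel)"
    apply (subst nn_integral_add[symmetric], measurable)
    apply (intro nn_integral_cong)
    apply (subst nn_integral_add[symmetric], measurable)
    done
  also have "(\<integral>\<^sup>+s. \<integral>\<^sup>+t. W s t * ennreal (e^4) \<partial>lborel \<partial>lborel) = ennreal (\<alpha> * \<beta> * e^4)"
  proof -
    have "(\<integral>\<^sup>+s. \<integral>\<^sup>+t. W s t * ennreal (e^4) \<partial>lborel \<partial>lborel)
        = (\<integral>\<^sup>+s. (indicator {0..<\<alpha>} s * ennreal (e^4)) * (\<integral>\<^sup>+t. indicator {0..<\<beta>} t \<partial>lborel) \<partial>lborel)"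
      unfolding W_def
      by (intro nn_integral_cong, subst nn_integral_cmult[symmetric]) (measurable, simp only: ac_simps)
    also have "\<dots> = (\<integral>\<^sup>+s. indicator {0..<\<alpha>} s * (ennreal (e^4) * ennreal \<beta>) \<partial>lborel)"
      using ab by (simp only: nn_integral_indicator sets_lborel atLeastLessThan_borel emeasure_lborel_Ico diff_zero mult.assoc)
    also have "\<dots> = ennreal \<alpha> * (ennreal (e^4) * ennreal \<beta>)"
      using ab by (subst nn_integral_multc) (simp_all add: emeasure_lborel_Ico)
    also have "\<dots> = ennreal (\<alpha> * \<beta> * e^4)"
      using ab by (simp add: ennreal_mult'' ac_simps)
    finally show ?thesis .
  qed
  finally show ?thesis using eg ef by simp
qed



lemma ennreal_min_split: "(x::ennreal) = min x (ennreal a) + (x - ennreal a)"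
proof (cases "x \<le> ennreal a")
  case True
  then have "x < top" using order.strict_trans1 ennreal_less_top by blast
  with True show ?thesis by (simp add: min_def diff_eq_0_ennreal)
next
  case False then show ?thesis by (simp add: min_def add_diff_inverse_ennreal)
qed

lemma pw_split:
  fixes G A a c :: ennreal
  assumes "G \<le> 1" "A \<le> a"
  shows "G * A * c \<le> G * min A (ennreal \<alpha>) * min c (ennreal \<gamma>) + (a - ennreal \<alpha>) * c + a * (c - ennreal \<gamma>)"
proof -
  have "G * A * c = G * (min A (ennreal \<alpha>) + (A - ennreal \<alpha>)) * (min c (ennreal \<gamma>) + (c - ennreal \<gamma>))"
    by (metis ennreal_min_split)
  also have "\<dots> = G * min A (ennreal \<alpha>) * min c (ennreal \<gamma>) + G * (A - ennreal \<alpha>) * c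
      + G * min A (ennreal \<alpha>) * (c - ennreal \<gamma>)"
    by (subst (3) ennreal_min_split[of c \<gamma>]) (simp add: algebra_simps)
  also have "\<dots> \<le> G * min A (ennreal \<alpha>) * min c (ennreal \<gamma>) + (a - ennreal \<alpha>) * c + a * (c - ennreal \<gamma>)"
  proof (intro add_mono order.refl)
    have "G * (A - ennreal \<alpha>) \<le> 1 * (a - ennreal \<alpha>)"
      using assms by (intro mult_mono) (auto intro: ennreal_minus_mono)
    then show "G * (A - ennreal \<alpha>) * c \<le> (a - ennreal \<alpha>) * c" by (simp add: mult_right_mono)
    have "G * min A (ennreal \<alpha>) \<le> 1 * a"
      using assms by (intro mult_mono) (auto simp: min.coboundedI1)
    then show "G * min A (ennreal \<alpha>) * (c - ennreal \<gamma>) \<le> a * (c - ennreal \<gamma>)" by (simp add: mult_right_mono)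
  qed
  finally show ?thesis .
qed




lemma nn_add3: "f \<in> borel_measurable M \<Longrightarrow> g \<in> borel_measurable M \<Longrightarrow> h \<in> borel_measurable M \<Longrightarrow>
  (\<integral>\<^sup>+x. f x + g x + h x \<partial>M) = integral\<^sup>N M f + integral\<^sup>N M g + integral\<^sup>N M h"
  by (simp add: nn_integral_add)

lemma nn_add4: "f \<in> borel_measurable M \<Longrightarrow> g \<in> borel_measurable M \<Longrightarrow> h \<in> borel_measurable M \<Longrightarrow> k \<in> borel_measurable M \<Longrightarrow>
  (\<integral>\<^sup>+x. f x + g x + h x + k x \<partial>M) = integral\<^sup>N M f + integral\<^sup>N M g + integral\<^sup>N M h + integral\<^sup>N M k"
  by (simp add: nn_integral_add)

definition ker :: "('v \<Rightarrow> 'w \<Rightarrow> real) \<Rightarrow> ('v \<Rightarrow> ennreal) \<Rightarrow> 'v \<Rightarrow> 'w \<Rightarrow> ennreal" where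
  "ker h \<phi> v w = ennreal (h v w) * \<phi> v"

definition one_fn :: "'v \<Rightarrow> ennreal" where "one_fn v = 1"

lemma step:
  fixes Y :: "'y measure" and V :: "'v measure" and W :: "'w measure"
    and f g :: "'v \<Rightarrow> 'w \<Rightarrow> real" and \<phi> :: "'v \<Rightarrow> ennreal"
    and a :: "'y \<Rightarrow> 'v \<Rightarrow> ennreal" and c :: "'y \<Rightarrow> 'w \<Rightarrow> ennreal"
  assumes PY: "prob_space Y" and PV: "prob_space V" and PW: "prob_space W"
    and gp: "good_pair V W f g e"
    and [measurable]: "case_prod a \<in> borel_measurable (Y \<Otimes>\<^sub>M V)"
      "case_prod c \<in> borel_measurable (Y \<Otimes>\<^sub>M W)" "\<phi> \<in> borel_measurable V"
    and phi: "\<And>v. v \<in> space V \<Longrightarrow> \<phi> v \<le> 1"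
    and al: "0 \<le> \<alpha>" and ga: "0 \<le> \<gamma>"
  shows "(\<integral>\<^sup>+y. \<integral>\<^sup>+v. \<integral>\<^sup>+w. ker g \<phi> v w * a y v * c y w \<partial>W \<partial>V \<partial>Y)
    \<le> (\<integral>\<^sup>+y. \<integral>\<^sup>+v. \<integral>\<^sup>+w. ker f \<phi> v w * a y v * c y w \<partial>W \<partial>V \<partial>Y)
      + ennreal (\<alpha> * \<gamma> * e^4)
      + (\<integral>\<^sup>+y. (\<integral>\<^sup>+v. a y v - ennreal \<alpha> \<partial>V) * (\<integral>\<^sup>+w. c y w \<partial>W) \<partial>Y)
      + (\<integral>\<^sup>+y. (\<integral>\<^sup>+v. a y v \<partial>V) * (\<integral>\<^sup>+w. c y w - ennreal \<gamma> \<partial>W) \<partial>Y)"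
proof -
  interpret Y: prob_space Y by (rule PY)
  interpret V: prob_space V by (rule PV)
  interpret W: prob_space W by (rule PW)
  have [measurable]: "case_prod f \<in> borel_measurable (V \<Otimes>\<^sub>M W)"
    "case_prod g \<in> borel_measurable (V \<Otimes>\<^sub>M W)"
    and fg: "\<And>x y. x \<in> space V \<Longrightarrow> y \<in> space W \<Longrightarrow> 0 \<le> f x y \<and> 0 \<le> g x y \<and> g x y \<le> 1"
    using gp unfolding good_pair_def by auto
  define K where "K = ennreal (\<alpha> * \<gamma> * e^4)"
  have Py: "(\<integral>\<^sup>+v. \<integral>\<^sup>+w. ennreal (g v w) * \<phi> v * a y v * c y w \<partial>W \<partial>V)
    \<le> (\<integral>\<^sup>+v. \<integral>\<^sup>+w. ennreal (f v w) * \<phi> v * a y v * c y w \<partial>W \<partial>V) + K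
      + (\<integral>\<^sup>+v. a y v - ennreal \<alpha> \<partial>V) * (\<integral>\<^sup>+w. c y w \<partial>W)
      + (\<integral>\<^sup>+v. a y v \<partial>V) * (\<integral>\<^sup>+w. c y w - ennreal \<gamma> \<partial>W)"
    if y: "y \<in> space Y" for y
  proof -
    define u where "u v = enn2real (min (\<phi> v * a y v) (ennreal \<alpha>))" for v
    define t where "t w = enn2real (min (c y w) (ennreal \<gamma>))" for w
    have [measurable]: "u \<in> borel_measurable V" unfolding u_def using y by measurable
    have [measurable]: "t \<in> borel_measurable W" unfolding t_def using y by measurable
    have eu: "ennreal (u v) = min (\<phi> v * a y v) (ennreal \<alpha>)" for v
      unfolding u_def by (rule ennreal_enn2real) (metis min.cobounded2 ennreal_less_top order.strict_trans1 less_top)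
    have et: "ennreal (t w) = min (c y w) (ennreal \<gamma>)" for w
      unfolding t_def by (rule ennreal_enn2real) (metis min.cobounded2 ennreal_less_top order.strict_trans1 less_top)
    have ub: "0 \<le> u v \<and> u v \<le> \<alpha>" for v
      using eu[of v] al by (auto simp: u_def enn2real_leI)
    have tb: "0 \<le> t w \<and> t w \<le> \<gamma>" for w
      using et[of w] ga by (auto simp: t_def enn2real_leI)
    have "(\<integral>\<^sup>+v. \<integral>\<^sup>+w. ennreal (g v w) * \<phi> v * a y v * c y w \<partial>W \<partial>V)
      \<le> (\<integral>\<^sup>+v. \<integral>\<^sup>+w. ennreal (g v w) * ennreal (u v) * ennreal (t w)
            + (a y v - ennreal \<alpha>) * c y w + a y v * (c y w - ennreal \<gamma>) \<partial>W \<partial>V)"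
    proof (intro nn_integral_mono)
      fix v w assume v: "v \<in> space V" and w: "w \<in> space W"
      have "ennreal (g v w) * (\<phi> v * a y v) * c y w \<le> ennreal (g v w) * min (\<phi> v * a y v) (ennreal \<alpha>) * min (c y w) (ennreal \<gamma>)
         + (a y v - ennreal \<alpha>) * c y w + a y v * (c y w - ennreal \<gamma>)"
      proof (intro pw_split)
        show "ennreal (g v w) \<le> 1" using fg[OF v w] by simp
        show "\<phi> v * a y v \<le> a y v" using mult_right_mono[OF phi[OF v], of "a y v"] by simp
      qed
      then show "ennreal (g v w) * \<phi> v * a y v * c y w \<le> ennreal (g v w) * ennreal (u v) * ennreal (t w)
            + (a y v - ennreal \<alpha>) * c y w + a y v * (c y w - ennreal \<gamma>)"
        by (simp add: eu et mult.assoc)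
    qed
    also have "\<dots> = (\<integral>\<^sup>+v. (\<integral>\<^sup>+w. ennreal (g v w) * ennreal (u v) * ennreal (t w) \<partial>W)
        + (\<integral>\<^sup>+w. (a y v - ennreal \<alpha>) * c y w \<partial>W)
        + (\<integral>\<^sup>+w. a y v * (c y w - ennreal \<gamma>) \<partial>W) \<partial>V)"
      using y by (intro nn_integral_cong nn_add3) measurable
    also have "\<dots> = (\<integral>\<^sup>+v. \<integral>\<^sup>+w. ennreal (g v w) * ennreal (u v) * ennreal (t w) \<partial>W \<partial>V)
        + (\<integral>\<^sup>+v. \<integral>\<^sup>+w. (a y v - ennreal \<alpha>) * c y w \<partial>W \<partial>V)
        + (\<integral>\<^sup>+v. \<integral>\<^sup>+w. a y v * (c y w - ennreal \<gamma>) \<partial>W \<partial>V)"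
      using y by (intro nn_add3) measurable
    also have "(\<integral>\<^sup>+v. \<integral>\<^sup>+w. (a y v - ennreal \<alpha>) * c y w \<partial>W \<partial>V)
        = (\<integral>\<^sup>+v. a y v - ennreal \<alpha> \<partial>V) * (\<integral>\<^sup>+w. c y w \<partial>W)"
      using y by (simp add: nn_integral_cmult nn_integral_multc)
    also have "(\<integral>\<^sup>+v. \<integral>\<^sup>+w. a y v * (c y w - ennreal \<gamma>) \<partial>W \<partial>V)
        = (\<integral>\<^sup>+v. a y v \<partial>V) * (\<integral>\<^sup>+w. c y w - ennreal \<gamma> \<partial>W)"
      using y by (simp add: nn_integral_cmult nn_integral_multc)
    also have "(\<integral>\<^sup>+v. \<integral>\<^sup>+w. ennreal (g v w) * ennreal (u v) * ennreal (t w) \<partial>W \<partial>V)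
        \<le> (\<integral>\<^sup>+v. \<integral>\<^sup>+w. ennreal (f v w) * ennreal (u v) * ennreal (t w) \<partial>W \<partial>V) + K"
      unfolding K_def by (rule core[OF PV PW gp _ _ _ _ al ga]) (auto simp: ub tb)
    also have "(\<integral>\<^sup>+v. \<integral>\<^sup>+w. ennreal (f v w) * ennreal (u v) * ennreal (t w) \<partial>W \<partial>V)
        \<le> (\<integral>\<^sup>+v. \<integral>\<^sup>+w. ennreal (f v w) * \<phi> v * a y v * c y w \<partial>W \<partial>V)"
    proof (intro nn_integral_mono)
      fix v w
      have "ennreal (f v w) * ennreal (u v) * ennreal (t w) \<le> ennreal (f v w) * (\<phi> v * a y v) * c y w"
        unfolding eu et by (intro mult_mono) auto
      then show "ennreal (f v w) * ennreal (u v) * ennreal (t w) \<le> ennreal (f v w) * \<phi> v * a y v * c y w"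
        by (simp add: mult.assoc)
    qed
    finally show ?thesis by (simp add: add_right_mono)
  qed
  have "(\<integral>\<^sup>+y. \<integral>\<^sup>+v. \<integral>\<^sup>+w. ennreal (g v w) * \<phi> v * a y v * c y w \<partial>W \<partial>V \<partial>Y)
    \<le> (\<integral>\<^sup>+y. (\<integral>\<^sup>+v. \<integral>\<^sup>+w. ennreal (f v w) * \<phi> v * a y v * c y w \<partial>W \<partial>V) + K
      + (\<integral>\<^sup>+v. a y v - ennreal \<alpha> \<partial>V) * (\<integral>\<^sup>+w. c y w \<partial>W)
      + (\<integral>\<^sup>+v. a y v \<partial>V) * (\<integral>\<^sup>+w. c y w - ennreal \<gamma> \<partial>W) \<partial>Y)"
    by (intro nn_integral_mono Py)
  also have "\<dots> = (\<integral>\<^sup>+y. \<integral>\<^sup>+v. \<integral>\<^sup>+w. ennreal (f v w) * \<phi> v * a y v * c y w \<partial>W \<partial>V \<partial>Y)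
      + (\<integral>\<^sup>+y. K \<partial>Y)
      + (\<integral>\<^sup>+y. (\<integral>\<^sup>+v. a y v - ennreal \<alpha> \<partial>V) * (\<integral>\<^sup>+w. c y w \<partial>W) \<partial>Y)
      + (\<integral>\<^sup>+y. (\<integral>\<^sup>+v. a y v \<partial>V) * (\<integral>\<^sup>+w. c y w - ennreal \<gamma> \<partial>W) \<partial>Y)"
    by (intro nn_add4) measurable
  also have "(\<integral>\<^sup>+y. K \<partial>Y) = K" by (simp add: Y.emeasure_space_1)
  finally show ?thesis unfolding K_def by (simp only: ker_def)
qed




lemma inv_markov: assumes "0 < e" "\<not> (u \<le> ennreal (1/e))" shows "1 \<le> ennreal e * u"
proof (cases u)
  case (real t)
  with assms have "1/e < t" by (auto simp: not_le ennreal_less_iff)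
  then have "1 < e * t" using assms(1) by (simp add: field_simps)
  then show ?thesis using real assms(1) by (simp add: ennreal_mult''[symmetric] ennreal_1[symmetric] del: ennreal_1)
next
  case top with assms show ?thesis by (simp add: ennreal_mult_top)
qed

lemma sq_excess: assumes "0 < T" shows "x - ennreal T \<le> x^2 * ennreal (1/(4*T))"
proof (cases x)
  case (real t)
  have "t - T \<le> t^2 * (1/(4*T))"
  proof -
    have "(t - 2*T)^2 = t^2 - 4*T*(t - T)" by (simp add: power2_eq_square algebra_simps)
    moreover have "0 \<le> (t - 2*T)^2" by simp
    ultimately have "4*T*(t - T) \<le> t^2" by linarith
    then show ?thesis using assms by (simp add: field_simps)
  qed
  then have "ennreal (t - T) \<le> ennreal (t^2 * (1/(4*T)))" by (rule ennreal_leI)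
  moreover have "ennreal t - ennreal T = ennreal (t - T)" using assms by (simp add: ennreal_minus)
  moreover have "(ennreal t)^2 * ennreal (1/(4*T)) = ennreal (t^2 * (1/(4*T)))"
    using real assms by (simp add: ennreal_power, subst ennreal_mult[symmetric]) auto
  ultimately show ?thesis using real by simp
next
  case top with assms show ?thesis by (simp add: ennreal_mult_top)
qed

lemma amgm: assumes "0 < K" shows "x \<le> ennreal (K/2) + x^2 * ennreal (1/(2*K))"
proof (cases x)
  case (real t)
  have "t \<le> K/2 + t^2 * (1/(2*K))"
  proof -
    have "(K - t)^2 = K^2 + t^2 - 2*K*t" by (simp add: power2_eq_square algebra_simps)
    moreover have "0 \<le> (K - t)^2" by simp
    ultimately have "2*K*t \<le> K^2 + t^2" by linarith
    then show ?thesis using assms by (simp add: field_simps power2_eq_square)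
  qed
  then have "ennreal t \<le> ennreal (K/2 + t^2 * (1/(2*K)))" by (rule ennreal_leI)
  moreover have "ennreal (K/2) + (ennreal t)^2 * ennreal (1/(2*K)) = ennreal (K/2 + t^2 * (1/(2*K)))"
    using real assms by (simp add: ennreal_power, subst ennreal_mult[symmetric], auto simp: ennreal_plus[symmetric] simp del: ennreal_plus)
  ultimately show ?thesis using real by simp
next
  case top with assms show ?thesis by (simp add: ennreal_mult_top)
qed




lemma gp_meas: "good_pair M N f g e \<Longrightarrow> case_prod f \<in> borel_measurable (M \<Otimes>\<^sub>M N) \<and> case_prod g \<in> borel_measurable (M \<Otimes>\<^sub>M N)"
  unfolding good_pair_def by blast
lemma gp_bnd: "good_pair M N f g e \<Longrightarrow> x \<in> space M \<Longrightarrow> y \<in> space N \<Longrightarrow> 0 \<le> f x y \<and> 0 \<le> g x y \<and> g x y \<le> 1"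
  unfolding good_pair_def by blast

locale main = five M1 M2 M3 M4 M5
  for M1 :: "'a measure" and M2 :: "'b measure" and M3 :: "'c measure"
    and M4 :: "'d measure" and M5 :: "'e measure" +
  fixes f12 g12 :: "'a \<Rightarrow> 'b \<Rightarrow> real" and f23 g23 :: "'b \<Rightarrow> 'c \<Rightarrow> real"
    and f34 g34 :: "'c \<Rightarrow> 'd \<Rightarrow> real" and f45 g45 :: "'d \<Rightarrow> 'e \<Rightarrow> real"
    and f51 g51 :: "'e \<Rightarrow> 'a \<Rightarrow> real"
    and \<epsilon> C :: real
  assumes eps: "0 < \<epsilon>" "\<epsilon> < 1" and C1: "1 \<le> C"
    and gp12: "good_pair M1 M2 f12 g12 \<epsilon>" and gp23: "good_pair M2 M3 f23 g23 \<epsilon>"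
    and gp34: "good_pair M3 M4 f34 g34 \<epsilon>" and gp45: "good_pair M4 M5 f45 g45 \<epsilon>"
    and gp51: "good_pair M5 M1 f51 g51 \<epsilon>"
    and c123: "comp_sq_norm M1 M2 M3 f12 f23 \<le> ennreal C"
    and c234: "comp_sq_norm M2 M3 M4 f23 f34 \<le> ennreal C"
    and c345: "comp_sq_norm M3 M4 M5 f34 f45 \<le> ennreal C"
    and c451: "comp_sq_norm M4 M5 M1 f45 f51 \<le> ennreal C"
begin

sublocale A1: prob_space M1 by (rule P1)
sublocale A2: prob_space M2 by (rule P2)
sublocale A3: prob_space M3 by (rule P3)
sublocale A4: prob_space M4 by (rule P4)
sublocale A5: prob_space M5 by (rule P5)

lemma meas[measurable]:
  "case_prod f12 \<in> borel_measurable (M1 \<Otimes>\<^sub>M M2)" "case_prod g12 \<in> borel_measurable (M1 \<Otimes>\<^sub>M M2)"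
  "case_prod f23 \<in> borel_measurable (M2 \<Otimes>\<^sub>M M3)" "case_prod g23 \<in> borel_measurable (M2 \<Otimes>\<^sub>M M3)"
  "case_prod f34 \<in> borel_measurable (M3 \<Otimes>\<^sub>M M4)" "case_prod g34 \<in> borel_measurable (M3 \<Otimes>\<^sub>M M4)"
  "case_prod f45 \<in> borel_measurable (M4 \<Otimes>\<^sub>M M5)" "case_prod g45 \<in> borel_measurable (M4 \<Otimes>\<^sub>M M5)"
  "case_prod f51 \<in> borel_measurable (M5 \<Otimes>\<^sub>M M1)" "case_prod g51 \<in> borel_measurable (M5 \<Otimes>\<^sub>M M1)"
  using gp_meas[OF gp12] gp_meas[OF gp23] gp_meas[OF gp34] gp_meas[OF gp45] gp_meas[OF gp51] by auto

lemma bnd12: "x \<in> space M1 \<Longrightarrow> y \<in> space M2 \<Longrightarrow> 0 \<le> f12 x y \<and> 0 \<le> g12 x y \<and> g12 x y \<le> 1"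
  by (rule gp_bnd[OF gp12])
lemma bnd23: "x \<in> space M2 \<Longrightarrow> y \<in> space M3 \<Longrightarrow> 0 \<le> f23 x y \<and> 0 \<le> g23 x y \<and> g23 x y \<le> 1"
  by (rule gp_bnd[OF gp23])
lemma bnd34: "x \<in> space M3 \<Longrightarrow> y \<in> space M4 \<Longrightarrow> 0 \<le> f34 x y \<and> 0 \<le> g34 x y \<and> g34 x y \<le> 1"
  by (rule gp_bnd[OF gp34])
lemma bnd45: "x \<in> space M4 \<Longrightarrow> y \<in> space M5 \<Longrightarrow> 0 \<le> f45 x y \<and> 0 \<le> g45 x y \<and> g45 x y \<le> 1"
  by (rule gp_bnd[OF gp45])
lemma bnd51: "x \<in> space M5 \<Longrightarrow> y \<in> space M1 \<Longrightarrow> 0 \<le> f51 x y \<and> 0 \<le> g51 x y \<and> g51 x y \<le> 1"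
  by (rule gp_bnd[OF gp51])

definition "B x4 x1 = (\<integral>\<^sup>+x5. ennreal (f45 x4 x5) * ennreal (f51 x5 x1) \<partial>M5)"
definition "Pc x4 x2 = (\<integral>\<^sup>+x3. ennreal (f23 x2 x3) * ennreal (f34 x3 x4) \<partial>M3)"
definition "Q x5 x3 = (\<integral>\<^sup>+x4. ennreal (f34 x3 x4) * ennreal (f45 x4 x5) \<partial>M4)"

lemma measB[measurable]: "case_prod B \<in> borel_measurable (M4 \<Otimes>\<^sub>M M1)"
  unfolding B_def by measurable
lemma measPc[measurable]: "case_prod Pc \<in> borel_measurable (M4 \<Otimes>\<^sub>M M2)"
  unfolding Pc_def by measurable
lemma measQ[measurable]: "case_prod Q \<in> borel_measurable (M5 \<Otimes>\<^sub>M M3)"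
  unfolding Q_def by measurable

definition "S4 = {x4 \<in> space M4. (\<integral>\<^sup>+x1. (B x4 x1)^2 \<partial>M1) \<le> ennreal (1/\<epsilon>) \<and> (\<integral>\<^sup>+x2. (Pc x4 x2)^2 \<partial>M2) \<le> ennreal (1/\<epsilon>)}"
definition "R5 = {x5 \<in> space M5. (\<integral>\<^sup>+x1. ennreal (f51 x5 x1) \<partial>M1) \<le> ennreal (1/\<epsilon>)}"

lemma measS4[measurable]: "S4 \<in> sets M4" unfolding S4_def by measurable
lemma measR5[measurable]: "R5 \<in> sets M5" unfolding R5_def by measurable

lemma sqB: "(\<integral>\<^sup>+x4. \<integral>\<^sup>+x1. (B x4 x1)^2 \<partial>M1 \<partial>M4) \<le> ennreal C"
proof -
  have "(\<integral>\<^sup>+x4. \<integral>\<^sup>+x1. (B x4 x1)^2 \<partial>M1 \<partial>M4) = comp_sq_norm M4 M5 M1 f45 f51"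
    unfolding comp_sq_norm_def
    apply (subst A1.nn_integral_fst[symmetric], measurable)
    apply (intro nn_integral_cong)
    apply (simp add: B_def)
    apply (intro arg_cong[where f="\<lambda>x. x^2"] nn_integral_cong)
    apply (simp add: ennreal_mult bnd45 bnd51)
    done
  with c451 show ?thesis by simp
qed


lemma sqB': "(\<integral>\<^sup>+x1. \<integral>\<^sup>+x4. (B x4 x1)^2 \<partial>M4 \<partial>M1) \<le> ennreal C"
proof -
  have "(\<integral>\<^sup>+x1. \<integral>\<^sup>+x4. (B x4 x1)^2 \<partial>M4 \<partial>M1) = (\<integral>\<^sup>+x4. \<integral>\<^sup>+x1. (B x4 x1)^2 \<partial>M1 \<partial>M4)"
    by (rule nn_swap[OF S1 S4]) measurable
  then show ?thesis using sqB by simp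
qed

lemma sqP: "(\<integral>\<^sup>+x4. \<integral>\<^sup>+x2. (Pc x4 x2)^2 \<partial>M2 \<partial>M4) \<le> ennreal C"
proof -
  have "(\<integral>\<^sup>+x2. \<integral>\<^sup>+x4. (Pc x4 x2)^2 \<partial>M4 \<partial>M2) = comp_sq_norm M2 M3 M4 f23 f34"
    unfolding comp_sq_norm_def
    apply (subst A4.nn_integral_fst[symmetric], measurable)
    apply (intro nn_integral_cong)
    apply (simp add: Pc_def)
    apply (intro arg_cong[where f="\<lambda>x. x^2"] nn_integral_cong)
    apply (simp add: ennreal_mult bnd23 bnd34)
    done
  with c234 have "(\<integral>\<^sup>+x2. \<integral>\<^sup>+x4. (Pc x4 x2)^2 \<partial>M4 \<partial>M2) \<le> ennreal C" by simp
  moreover have "(\<integral>\<^sup>+x4. \<integral>\<^sup>+x2. (Pc x4 x2)^2 \<partial>M2 \<partial>M4) = (\<integral>\<^sup>+x2. \<integral>\<^sup>+x4. (Pc x4 x2)^2 \<partial>M4 \<partial>M2)"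
    by (rule nn_swap[OF S4 S2]) measurable
  ultimately show ?thesis by simp
qed

lemma sqQ: "(\<integral>\<^sup>+x5. \<integral>\<^sup>+x3. (Q x5 x3)^2 \<partial>M3 \<partial>M5) \<le> ennreal C"
proof -
  have "(\<integral>\<^sup>+x3. \<integral>\<^sup>+x5. (Q x5 x3)^2 \<partial>M5 \<partial>M3) = comp_sq_norm M3 M4 M5 f34 f45"
    unfolding comp_sq_norm_def
    apply (subst A5.nn_integral_fst[symmetric], measurable)
    apply (intro nn_integral_cong)
    apply (simp add: Q_def)
    apply (intro arg_cong[where f="\<lambda>x. x^2"] nn_integral_cong)
    apply (simp add: ennreal_mult bnd34 bnd45)
    done
  with c345 have "(\<integral>\<^sup>+x3. \<integral>\<^sup>+x5. (Q x5 x3)^2 \<partial>M5 \<partial>M3) \<le> ennreal C" by simp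
  moreover have "(\<integral>\<^sup>+x5. \<integral>\<^sup>+x3. (Q x5 x3)^2 \<partial>M3 \<partial>M5) = (\<integral>\<^sup>+x3. \<integral>\<^sup>+x5. (Q x5 x3)^2 \<partial>M5 \<partial>M3)"
    by (rule nn_swap[OF S5 S3]) measurable
  ultimately show ?thesis by simp
qed

lemma markov_set:
  fixes M :: "'x measure" and u :: "'x \<Rightarrow> ennreal"
  assumes [measurable]: "u \<in> borel_measurable M"
  shows "emeasure M {x \<in> space M. \<not> (u x \<le> ennreal (1/\<epsilon>))} \<le> ennreal \<epsilon> * (\<integral>\<^sup>+x. u x \<partial>M)"
proof -
  have "emeasure M {x \<in> space M. \<not> (u x \<le> ennreal (1/\<epsilon>))} \<le> emeasure M {x \<in> space M. 1 \<le> ennreal \<epsilon> * u x}"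
    using eps by (intro emeasure_mono) (auto intro: inv_markov)
  also have "\<dots> \<le> ennreal \<epsilon> * (\<integral>\<^sup>+x. u x * indicator (space M) x \<partial>M)"
    by (rule nn_integral_Markov_inequality) measurable
  also have "(\<integral>\<^sup>+x. u x * indicator (space M) x \<partial>M) = (\<integral>\<^sup>+x. u x \<partial>M)"
    by (intro nn_integral_cong) simp
  finally show ?thesis .
qed

lemma mS4: "emeasure M4 (space M4 - S4) \<le> ennreal (2 * C * \<epsilon>)"
proof -
  have "space M4 - S4 \<subseteq> {x \<in> space M4. \<not> ((\<integral>\<^sup>+x1. (B x x1)^2 \<partial>M1) \<le> ennreal (1/\<epsilon>))}
     \<union> {x \<in> space M4. \<not> ((\<integral>\<^sup>+x2. (Pc x x2)^2 \<partial>M2) \<le> ennreal (1/\<epsilon>))}"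
    unfolding S4_def by auto
  then have "emeasure M4 (space M4 - S4) \<le> emeasure M4 ({x \<in> space M4. \<not> ((\<integral>\<^sup>+x1. (B x x1)^2 \<partial>M1) \<le> ennreal (1/\<epsilon>))}
     \<union> {x \<in> space M4. \<not> ((\<integral>\<^sup>+x2. (Pc x x2)^2 \<partial>M2) \<le> ennreal (1/\<epsilon>))})"
    by (intro emeasure_mono) measurable
  also have "\<dots> \<le> emeasure M4 {x \<in> space M4. \<not> ((\<integral>\<^sup>+x1. (B x x1)^2 \<partial>M1) \<le> ennreal (1/\<epsilon>))}
     + emeasure M4 {x \<in> space M4. \<not> ((\<integral>\<^sup>+x2. (Pc x x2)^2 \<partial>M2) \<le> ennreal (1/\<epsilon>))}"
    by (intro emeasure_subadditive) measurable
  also have "\<dots> \<le> ennreal \<epsilon> * ennreal C + ennreal \<epsilon> * ennreal C"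
  proof (intro add_mono)
    show "emeasure M4 {x \<in> space M4. \<not> ((\<integral>\<^sup>+x1. (B x x1)^2 \<partial>M1) \<le> ennreal (1/\<epsilon>))} \<le> ennreal \<epsilon> * ennreal C"
      by (rule order.trans[OF markov_set]) (measurable, intro mult_left_mono sqB, simp)
    show "emeasure M4 {x \<in> space M4. \<not> ((\<integral>\<^sup>+x2. (Pc x x2)^2 \<partial>M2) \<le> ennreal (1/\<epsilon>))} \<le> ennreal \<epsilon> * ennreal C"
      by (rule order.trans[OF markov_set]) (measurable, intro mult_left_mono sqP, simp)
  qed
  also have "\<dots> = ennreal (2 * C * \<epsilon>)"
    using eps C1 by (simp add: ennreal_mult[symmetric] ennreal_plus[symmetric] del: ennreal_plus)
  finally show ?thesis .
qed

lemma mass51: "(\<integral>\<^sup>+x5. \<integral>\<^sup>+x1. ennreal (f51 x5 x1) \<partial>M1 \<partial>M5) \<le> ennreal (1 + \<epsilon>^4)"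
proof -
  have "(\<integral>\<^sup>+x5. \<integral>\<^sup>+x1. ennreal (f51 x5 x1) \<partial>M1 \<partial>M5)
      = (\<integral>\<^sup>+x5. \<integral>\<^sup>+x1. ennreal (f51 x5 x1) * indicator (space M5) x5 * indicator (space M1) x1 \<partial>M1 \<partial>M5)"
    by (intro nn_integral_cong) simp
  also have "\<dots> \<le> (\<integral>\<^sup>+x5. \<integral>\<^sup>+x1. ennreal (g51 x5 x1) * indicator (space M5) x5 * indicator (space M1) x1 \<partial>M1 \<partial>M5) + ennreal (\<epsilon>^4)"
    by (rule cut_bound(2)[OF P5 P1 gp51]) auto
  also have "(\<integral>\<^sup>+x5. \<integral>\<^sup>+x1. ennreal (g51 x5 x1) * indicator (space M5) x5 * indicator (space M1) x1 \<partial>M1 \<partial>M5)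
      \<le> (\<integral>\<^sup>+x5. \<integral>\<^sup>+x1. 1 \<partial>M1 \<partial>M5)"
    by (intro nn_integral_mono) (simp add: bnd51)
  also have "(\<integral>\<^sup>+x5. \<integral>\<^sup>+x1. 1 \<partial>M1 \<partial>M5) = 1"
    by (simp add: A1.emeasure_space_1 A5.emeasure_space_1)
  finally show ?thesis by simp
qed

lemma mR5: "emeasure M5 (space M5 - R5) \<le> ennreal (2 * \<epsilon>)"
proof -
  have "space M5 - R5 = {x \<in> space M5. \<not> ((\<integral>\<^sup>+x1. ennreal (f51 x x1) \<partial>M1) \<le> ennreal (1/\<epsilon>))}"
    unfolding R5_def by auto
  then have "emeasure M5 (space M5 - R5) \<le> ennreal \<epsilon> * (\<integral>\<^sup>+x5. \<integral>\<^sup>+x1. ennreal (f51 x5 x1) \<partial>M1 \<partial>M5)"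
    by (simp add: markov_set)
  also have "\<dots> \<le> ennreal \<epsilon> * ennreal (1 + \<epsilon>^4)"
    by (intro mult_left_mono mass51) simp
  also have "\<dots> \<le> ennreal (2 * \<epsilon>)"
  proof -
    have "\<epsilon>^4 \<le> 1" using eps by (simp add: power_le_one)
    then have "\<epsilon> * (1 + \<epsilon>^4) \<le> 2 * \<epsilon>" using eps by (simp add: algebra_simps)
    then have "ennreal (\<epsilon> * (1 + \<epsilon>^4)) \<le> ennreal (2 * \<epsilon>)" by (rule ennreal_leI)
    moreover have "ennreal \<epsilon> * ennreal (1 + \<epsilon>^4) = ennreal (\<epsilon> * (1 + \<epsilon>^4))"
      using eps by (intro ennreal_mult[symmetric]) auto
    ultimately show ?thesis by simp
  qed
  finally show ?thesis .
qed

lemma l2_to_l1: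
  fixes M :: "'x measure" and u :: "'x \<Rightarrow> ennreal"
  assumes PM: "prob_space M" and [measurable]: "u \<in> borel_measurable M"
    and sq: "(\<integral>\<^sup>+x. (u x)^2 \<partial>M) \<le> ennreal (1/\<epsilon>)"
  shows "(\<integral>\<^sup>+x. u x \<partial>M) \<le> ennreal (1 / sqrt \<epsilon>)"
proof -
  interpret prob_space M by (rule PM)
  define K where "K = 1 / sqrt \<epsilon>"
  have K: "0 < K" "K^2 = 1/\<epsilon>" using eps by (auto simp: K_def power_divide)
  have "(\<integral>\<^sup>+x. u x \<partial>M) \<le> (\<integral>\<^sup>+x. ennreal (K/2) + (u x)^2 * ennreal (1/(2*K)) \<partial>M)"
    by (intro nn_integral_mono amgm K)
  also have "\<dots> = ennreal (K/2) + (\<integral>\<^sup>+x. (u x)^2 \<partial>M) * ennreal (1/(2*K))"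
    by (subst nn_integral_add) (auto simp: emeasure_space_1 nn_integral_multc)
  also have "\<dots> \<le> ennreal (K/2) + ennreal (1/\<epsilon>) * ennreal (1/(2*K))"
    by (intro add_mono mult_right_mono sq) auto
  also have "\<dots> = ennreal (K/2 + (1/\<epsilon>) * (1/(2*K)))"
    using eps K by (simp add: ennreal_mult[symmetric])
  also have "K/2 + (1/\<epsilon>) * (1/(2*K)) = K"
  proof -
    have "(1/\<epsilon>) * (1/(2*K)) = (K*K) * (1/(2*K))" using K(2) by (simp add: power2_eq_square)
    also have "\<dots> = K/2" using K(1) by simp
    finally have e: "(1/\<epsilon>) * (1/(2*K)) = K/2" .
    then show ?thesis by linarith
  qed
  finally show ?thesis unfolding K_def .
qed

lemma intB: "x4 \<in> S4 \<Longrightarrow> (\<integral>\<^sup>+x1. B x4 x1 \<partial>M1) \<le> ennreal (1 / sqrt \<epsilon>)"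
  by (rule l2_to_l1[OF P1]) (auto simp: S4_def)
lemma intPc: "x4 \<in> S4 \<Longrightarrow> (\<integral>\<^sup>+x2. Pc x4 x2 \<partial>M2) \<le> ennreal (1 / sqrt \<epsilon>)"
  by (rule l2_to_l1[OF P2]) (auto simp: S4_def)

lemma mker[measurable]:
  assumes [measurable]: "case_prod h \<in> borel_measurable (M \<Otimes>\<^sub>M N)" "\<phi> \<in> borel_measurable M"
  shows "case_prod (ker h \<phi>) \<in> borel_measurable (M \<Otimes>\<^sub>M N)"
  unfolding ker_def by measurable

lemma mone[measurable]: "one_fn \<in> borel_measurable M"
  unfolding one_fn_def[abs_def] by simp

definition "H h12 h23 h34 h45 h51 = cyc M1 M2 M3 M4 M5 (ker h12 one_fn) (ker h23 one_fn) (ker h34 one_fn)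
   (ker h45 (indicator S4)) (ker h51 (indicator R5))"

lemma add3: "0 \<le> a \<Longrightarrow> 0 \<le> b \<Longrightarrow> 0 \<le> c \<Longrightarrow> ennreal a + ennreal b + ennreal c = ennreal (a + b + c)"
  by (simp add: ennreal_plus)

lemma st1: "H g12 f23 f34 f45 f51 \<le> H f12 f23 f34 f45 f51 + ennreal (\<epsilon> + C * \<epsilon> / 4 + C * \<epsilon> / 4)"
proof -
  define r where "r = sqrt \<epsilon>"
  have r: "0 < r" "r^2 = \<epsilon>" using eps by (auto simp: r_def)
  define T where "T = 1 / r^3"
  have T: "0 < T" using r by (simp add: T_def)
  have TT: "T * T * \<epsilon>^4 = \<epsilon>"
    using r unfolding T_def by (simp add: field_simps power2_eq_square power3_eq_cube power4_eq_xxxx)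
  have Tr: "ennreal (1/(4*T)) * ennreal (1 / sqrt \<epsilon>) = ennreal (\<epsilon>/4)"
  proof -
    have "(1/(4*T)) * (1 / sqrt \<epsilon>) = \<epsilon>/4"
      using r unfolding T_def r_def[symmetric] by (simp add: field_simps power2_eq_square power3_eq_cube)
    then show ?thesis using T eps by (simp add: ennreal_mult[symmetric])
  qed
  define a where "a x4 x1 = (\<integral>\<^sup>+x5. ker f45 (indicator S4) x4 x5 * ker f51 (indicator R5) x5 x1 \<partial>M5)" for x4 x1
  define c where "c x4 x2 = (\<integral>\<^sup>+x3. ker f23 one_fn x2 x3 * ker f34 one_fn x3 x4 \<partial>M3)" for x4 x2
  have [measurable]: "case_prod a \<in> borel_measurable (M4 \<Otimes>\<^sub>M M1)" unfolding a_def by measurable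
  have [measurable]: "case_prod c \<in> borel_measurable (M4 \<Otimes>\<^sub>M M2)" unfolding c_def by measurable
  have eq: "H h f23 f34 f45 f51 = (\<integral>\<^sup>+x4. \<integral>\<^sup>+x1. \<integral>\<^sup>+x2. ker h one_fn x1 x2 * a x4 x1 * c x4 x2 \<partial>M2 \<partial>M1 \<partial>M4)"
    if [measurable]: "case_prod h \<in> borel_measurable (M1 \<Otimes>\<^sub>M M2)" for h
    unfolding H_def a_def c_def by (rule group) measurable
  define E1 where "E1 = (\<integral>\<^sup>+x4. (\<integral>\<^sup>+x1. a x4 x1 - ennreal T \<partial>M1) * (\<integral>\<^sup>+x2. c x4 x2 \<partial>M2) \<partial>M4)"
  define E2 where "E2 = (\<integral>\<^sup>+x4. (\<integral>\<^sup>+x1. a x4 x1 \<partial>M1) * (\<integral>\<^sup>+x2. c x4 x2 - ennreal T \<partial>M2) \<partial>M4)"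
  have main: "H g12 f23 f34 f45 f51 \<le> H f12 f23 f34 f45 f51 + ennreal (T*T*\<epsilon>^4) + E1 + E2"
    unfolding eq[OF meas(2)] eq[OF meas(1)] E1_def E2_def
    by (rule step[OF P4 P1 P2 gp12]) (measurable, auto simp: one_fn_def T less_imp_le)
  have ha: "a x4 x1 \<le> indicator S4 x4 * B x4 x1" if "x4 \<in> space M4" "x1 \<in> space M1" for x4 x1
  proof -
    have "a x4 x1 \<le> (\<integral>\<^sup>+x5. indicator S4 x4 * (ennreal (f45 x4 x5) * ennreal (f51 x5 x1)) \<partial>M5)"
      unfolding a_def ker_def
      by (intro nn_integral_mono) (auto split: split_indicator)
    also have "\<dots> = indicator S4 x4 * B x4 x1"
      unfolding B_def by (rule nn_integral_cmult) (use that in measurable)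
    finally show ?thesis .
  qed
  have hc: "c x4 x2 = Pc x4 x2" for x4 x2
    unfolding c_def Pc_def ker_def one_fn_def by simp
  have a0: "a x4 x1 = 0" if "x4 \<in> space M4" "x4 \<notin> S4" "x1 \<in> space M1" for x4 x1
    using ha[OF that(1,3)] that(2) by simp
  have aB: "a x4 x1 \<le> B x4 x1" if "x4 \<in> space M4" "x1 \<in> space M1" for x4 x1
  proof -
    have "indicator S4 x4 * B x4 x1 \<le> B x4 x1" by (cases "x4 \<in> S4") auto
    then show ?thesis using ha[OF that] by (rule order.trans[rotated])
  qed
  have E1b: "E1 \<le> ennreal (C * \<epsilon> / 4)"
  proof -
    have "E1 \<le> (\<integral>\<^sup>+x4. (\<integral>\<^sup>+x1. (B x4 x1)^2 \<partial>M1) * ennreal (\<epsilon>/4) \<partial>M4)"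
      unfolding E1_def
    proof (intro nn_integral_mono)
      fix x4 assume x4: "x4 \<in> space M4"
      show "(\<integral>\<^sup>+x1. a x4 x1 - ennreal T \<partial>M1) * (\<integral>\<^sup>+x2. c x4 x2 \<partial>M2)
          \<le> (\<integral>\<^sup>+x1. (B x4 x1)^2 \<partial>M1) * ennreal (\<epsilon>/4)"
      proof (cases "x4 \<in> S4")
        case True
        have "(\<integral>\<^sup>+x1. a x4 x1 - ennreal T \<partial>M1) \<le> (\<integral>\<^sup>+x1. (B x4 x1)^2 * ennreal (1/(4*T)) \<partial>M1)"
          by (intro nn_integral_mono order.trans[OF _ sq_excess[OF T]] ennreal_minus_mono aB x4) auto
        also have "\<dots> = (\<integral>\<^sup>+x1. (B x4 x1)^2 \<partial>M1) * ennreal (1/(4*T))"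
          by (rule nn_integral_multc) (use x4 in measurable)
        finally have 1: "(\<integral>\<^sup>+x1. a x4 x1 - ennreal T \<partial>M1) \<le> (\<integral>\<^sup>+x1. (B x4 x1)^2 \<partial>M1) * ennreal (1/(4*T))" .
        have 2: "(\<integral>\<^sup>+x2. c x4 x2 \<partial>M2) \<le> ennreal (1 / sqrt \<epsilon>)"
          unfolding hc using intPc[OF True] .
        have "(\<integral>\<^sup>+x1. a x4 x1 - ennreal T \<partial>M1) * (\<integral>\<^sup>+x2. c x4 x2 \<partial>M2)
            \<le> (\<integral>\<^sup>+x1. (B x4 x1)^2 \<partial>M1) * ennreal (1/(4*T)) * ennreal (1 / sqrt \<epsilon>)"
          by (intro mult_mono 1 2) auto
        also have "\<dots> = (\<integral>\<^sup>+x1. (B x4 x1)^2 \<partial>M1) * ennreal (\<epsilon>/4)"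
          using Tr by (simp add: mult.assoc)
        finally show ?thesis .
      next
        case False
        have "(\<integral>\<^sup>+x1. a x4 x1 - ennreal T \<partial>M1) = (\<integral>\<^sup>+x1. 0 \<partial>M1)"
          using a0[OF x4 False] by (intro nn_integral_cong) simp
        then show ?thesis by simp
      qed
    qed
    also have "\<dots> = (\<integral>\<^sup>+x4. \<integral>\<^sup>+x1. (B x4 x1)^2 \<partial>M1 \<partial>M4) * ennreal (\<epsilon>/4)"
      by (rule nn_integral_multc) measurable
    also have "\<dots> \<le> ennreal C * ennreal (\<epsilon>/4)"
      by (intro mult_right_mono sqB) simp
    also have "\<dots> = ennreal (C * \<epsilon> / 4)"
      using C1 eps by (simp add: ennreal_mult[symmetric])
    finally show ?thesis .
  qed
  have E2b: "E2 \<le> ennreal (C * \<epsilon> / 4)"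
  proof -
    have "E2 \<le> (\<integral>\<^sup>+x4. (\<integral>\<^sup>+x2. (Pc x4 x2)^2 \<partial>M2) * ennreal (\<epsilon>/4) \<partial>M4)"
      unfolding E2_def
    proof (intro nn_integral_mono)
      fix x4 assume x4: "x4 \<in> space M4"
      show "(\<integral>\<^sup>+x1. a x4 x1 \<partial>M1) * (\<integral>\<^sup>+x2. c x4 x2 - ennreal T \<partial>M2)
          \<le> (\<integral>\<^sup>+x2. (Pc x4 x2)^2 \<partial>M2) * ennreal (\<epsilon>/4)"
      proof (cases "x4 \<in> S4")
        case True
        have "(\<integral>\<^sup>+x2. c x4 x2 - ennreal T \<partial>M2) \<le> (\<integral>\<^sup>+x2. (Pc x4 x2)^2 * ennreal (1/(4*T)) \<partial>M2)"
          unfolding hc by (intro nn_integral_mono sq_excess[OF T])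
        also have "\<dots> = (\<integral>\<^sup>+x2. (Pc x4 x2)^2 \<partial>M2) * ennreal (1/(4*T))"
          by (rule nn_integral_multc) (use x4 in measurable)
        finally have 1: "(\<integral>\<^sup>+x2. c x4 x2 - ennreal T \<partial>M2) \<le> (\<integral>\<^sup>+x2. (Pc x4 x2)^2 \<partial>M2) * ennreal (1/(4*T))" .
        have "(\<integral>\<^sup>+x1. a x4 x1 \<partial>M1) \<le> (\<integral>\<^sup>+x1. B x4 x1 \<partial>M1)"
          by (intro nn_integral_mono aB x4)
        also have "\<dots> \<le> ennreal (1 / sqrt \<epsilon>)" by (rule intB[OF True])
        finally have 2: "(\<integral>\<^sup>+x1. a x4 x1 \<partial>M1) \<le> ennreal (1 / sqrt \<epsilon>)" .
        have "(\<integral>\<^sup>+x1. a x4 x1 \<partial>M1) * (\<integral>\<^sup>+x2. c x4 x2 - ennreal T \<partial>M2)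
            \<le> ennreal (1 / sqrt \<epsilon>) * ((\<integral>\<^sup>+x2. (Pc x4 x2)^2 \<partial>M2) * ennreal (1/(4*T)))"
          by (intro mult_mono 1 2) auto
        also have "\<dots> = (\<integral>\<^sup>+x2. (Pc x4 x2)^2 \<partial>M2) * ennreal (\<epsilon>/4)"
          by (subst Tr[symmetric]) (simp only: ac_simps)
        finally show ?thesis .
      next
        case False
        have "(\<integral>\<^sup>+x1. a x4 x1 \<partial>M1) = (\<integral>\<^sup>+x1. 0 \<partial>M1)"
          using a0[OF x4 False] by (intro nn_integral_cong) simp
        then show ?thesis by simp
      qed
    qed
    also have "\<dots> = (\<integral>\<^sup>+x4. \<integral>\<^sup>+x2. (Pc x4 x2)^2 \<partial>M2 \<partial>M4) * ennreal (\<epsilon>/4)"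
      by (rule nn_integral_multc) measurable
    also have "\<dots> \<le> ennreal C * ennreal (\<epsilon>/4)"
      by (intro mult_right_mono sqP) simp
    also have "\<dots> = ennreal (C * \<epsilon> / 4)"
      using C1 eps by (simp add: ennreal_mult[symmetric])
    finally show ?thesis .
  qed
  have "H g12 f23 f34 f45 f51 \<le> H f12 f23 f34 f45 f51 + ennreal (T*T*\<epsilon>^4) + E1 + E2" by (rule main)
  also have "\<dots> \<le> H f12 f23 f34 f45 f51 + ennreal \<epsilon> + ennreal (C * \<epsilon> / 4) + ennreal (C * \<epsilon> / 4)"
    by (intro add_mono order.refl E1b E2b) (simp add: TT)
  also have "\<dots> = H f12 f23 f34 f45 f51 + ennreal (\<epsilon> + C * \<epsilon> / 4 + C * \<epsilon> / 4)"
  proof -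
    have h: "ennreal \<epsilon> + ennreal (C * \<epsilon> / 4) + ennreal (C * \<epsilon> / 4) = ennreal (\<epsilon> + C * \<epsilon> / 4 + C * \<epsilon> / 4)"
      by (rule add3) (use eps C1 in auto)
    show ?thesis unfolding h[symmetric] by (simp only: add.assoc)
  qed
  finally show ?thesis .
qed
end


lemma le_minus0: "(x::ennreal) \<le> ennreal b \<Longrightarrow> x - ennreal b = 0"
  by (meson diff_eq_0_ennreal ennreal_less_top order.strict_trans1)

context main begin

lemma st2: "H g12 g23 f34 f45 f51 \<le> H g12 f23 f34 f45 f51 + ennreal (\<epsilon> + 0 + C * \<epsilon> / 4)"
proof -
  interpret R1: five M2 M3 M4 M5 M1 using P1 P2 P3 P4 P5 by (simp add: five_def)
  define K where "K = 1 / \<epsilon>"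
  define T where "T = 1 / \<epsilon>^2"
  have K: "0 < K" and T: "0 < T" using eps by (auto simp: K_def T_def)
  have KT: "K * T * \<epsilon>^4 = \<epsilon>"
    using eps unfolding K_def T_def by (simp add: field_simps power2_eq_square power4_eq_xxxx)
  have KT4: "K * (1/(4*T)) = \<epsilon>/4"
    using eps unfolding K_def T_def by (simp add: field_simps power2_eq_square)
  define a where "a x5 x2 = (\<integral>\<^sup>+x1. ker f51 (indicator R5) x5 x1 * ker g12 one_fn x1 x2 \<partial>M1)" for x5 x2
  define c where "c x5 x3 = (\<integral>\<^sup>+x4. ker f34 one_fn x3 x4 * ker f45 (indicator S4) x4 x5 \<partial>M4)" for x5 x3
  have [measurable]: "case_prod a \<in> borel_measurable (M5 \<Otimes>\<^sub>M M2)" unfolding a_def by measurable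
  have [measurable]: "case_prod c \<in> borel_measurable (M5 \<Otimes>\<^sub>M M3)" unfolding c_def by measurable
  have eq: "H g12 h f34 f45 f51 = (\<integral>\<^sup>+x5. \<integral>\<^sup>+x2. \<integral>\<^sup>+x3. ker h one_fn x2 x3 * a x5 x2 * c x5 x3 \<partial>M3 \<partial>M2 \<partial>M5)"
    if [measurable]: "case_prod h \<in> borel_measurable (M2 \<Otimes>\<^sub>M M3)" for h
    unfolding H_def a_def c_def
    by (subst rot, measurable, rule R1.group, measurable)
  define E1 where "E1 = (\<integral>\<^sup>+x5. (\<integral>\<^sup>+x2. a x5 x2 - ennreal K \<partial>M2) * (\<integral>\<^sup>+x3. c x5 x3 \<partial>M3) \<partial>M5)"
  define E2 where "E2 = (\<integral>\<^sup>+x5. (\<integral>\<^sup>+x2. a x5 x2 \<partial>M2) * (\<integral>\<^sup>+x3. c x5 x3 - ennreal T \<partial>M3) \<partial>M5)"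
  have main: "H g12 g23 f34 f45 f51 \<le> H g12 f23 f34 f45 f51 + ennreal (K*T*\<epsilon>^4) + E1 + E2"
    unfolding eq[OF meas(4)] eq[OF meas(3)] E1_def E2_def
    by (rule step[OF P5 P2 P3 gp23]) (measurable, auto simp: one_fn_def K T less_imp_le)
  have aK: "a x5 x2 \<le> ennreal K" if x5: "x5 \<in> space M5" and x2: "x2 \<in> space M2" for x5 x2
  proof -
    have "a x5 x2 \<le> (\<integral>\<^sup>+x1. indicator R5 x5 * ennreal (f51 x5 x1) \<partial>M1)"
      unfolding a_def ker_def one_fn_def
    proof (intro nn_integral_mono)
      fix x1 assume x1: "x1 \<in> space M1"
      have "ennreal (g12 x1 x2) \<le> 1" using bnd12[OF x1 x2] by simp
      then have "ennreal (f51 x5 x1) * indicator R5 x5 * (ennreal (g12 x1 x2) * 1)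
          \<le> ennreal (f51 x5 x1) * indicator R5 x5 * 1"
        by (intro mult_left_mono) auto
      then show "ennreal (f51 x5 x1) * indicator R5 x5 * (ennreal (g12 x1 x2) * 1)
          \<le> indicator R5 x5 * ennreal (f51 x5 x1)" by (simp add: ac_simps)
    qed
    also have "\<dots> = indicator R5 x5 * (\<integral>\<^sup>+x1. ennreal (f51 x5 x1) \<partial>M1)"
      by (rule nn_integral_cmult) (use x5 in measurable)
    also have "\<dots> \<le> ennreal K"
      by (cases "x5 \<in> R5") (auto simp: R5_def K_def)
    finally show ?thesis .
  qed
  have E10: "E1 = 0"
  proof -
    have "E1 = (\<integral>\<^sup>+x5. (\<integral>\<^sup>+x2. 0 \<partial>M2) * (\<integral>\<^sup>+x3. c x5 x3 \<partial>M3) \<partial>M5)"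
      unfolding E1_def
      by (intro nn_integral_cong arg_cong2[where f="(*)"] refl) (simp add: aK le_minus0)
    then show ?thesis by simp
  qed
  have cQ: "c x5 x3 \<le> Q x5 x3" if "x5 \<in> space M5" "x3 \<in> space M3" for x5 x3
    unfolding c_def Q_def ker_def one_fn_def
    by (intro nn_integral_mono) (auto split: split_indicator)
  have E2b: "E2 \<le> ennreal (C * \<epsilon> / 4)"
  proof -
    have "E2 \<le> (\<integral>\<^sup>+x5. (\<integral>\<^sup>+x3. (Q x5 x3)^2 \<partial>M3) * ennreal (\<epsilon>/4) \<partial>M5)"
      unfolding E2_def
    proof (intro nn_integral_mono)
      fix x5 assume x5: "x5 \<in> space M5"
      have 1: "(\<integral>\<^sup>+x2. a x5 x2 \<partial>M2) \<le> ennreal K"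
      proof -
        have "(\<integral>\<^sup>+x2. a x5 x2 \<partial>M2) \<le> (\<integral>\<^sup>+x2. ennreal K \<partial>M2)"
          by (intro nn_integral_mono aK x5)
        then show ?thesis by (simp add: A2.emeasure_space_1)
      qed
      have "(\<integral>\<^sup>+x3. c x5 x3 - ennreal T \<partial>M3) \<le> (\<integral>\<^sup>+x3. (Q x5 x3)^2 * ennreal (1/(4*T)) \<partial>M3)"
        by (intro nn_integral_mono order.trans[OF _ sq_excess[OF T]] ennreal_minus_mono cQ x5) auto
      also have "\<dots> = (\<integral>\<^sup>+x3. (Q x5 x3)^2 \<partial>M3) * ennreal (1/(4*T))"
        by (rule nn_integral_multc) (use x5 in measurable)
      finally have 2: "(\<integral>\<^sup>+x3. c x5 x3 - ennreal T \<partial>M3) \<le> (\<integral>\<^sup>+x3. (Q x5 x3)^2 \<partial>M3) * ennreal (1/(4*T))" .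
      have "(\<integral>\<^sup>+x2. a x5 x2 \<partial>M2) * (\<integral>\<^sup>+x3. c x5 x3 - ennreal T \<partial>M3)
          \<le> ennreal K * ((\<integral>\<^sup>+x3. (Q x5 x3)^2 \<partial>M3) * ennreal (1/(4*T)))"
        by (intro mult_mono 1 2) auto
      also have "\<dots> = (\<integral>\<^sup>+x3. (Q x5 x3)^2 \<partial>M3) * (ennreal K * ennreal (1/(4*T)))"
        by (simp only: ac_simps)
      also have "ennreal K * ennreal (1/(4*T)) = ennreal (\<epsilon>/4)"
      proof -
        have "ennreal K * ennreal (1/(4*T)) = ennreal (K * (1/(4*T)))"
          by (rule ennreal_mult[symmetric]) (use K T in auto)
        then show ?thesis by (simp only: KT4)
      qed
      finally show "(\<integral>\<^sup>+x2. a x5 x2 \<partial>M2) * (\<integral>\<^sup>+x3. c x5 x3 - ennreal T \<partial>M3)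
          \<le> (\<integral>\<^sup>+x3. (Q x5 x3)^2 \<partial>M3) * ennreal (\<epsilon>/4)" .
    qed
    also have "\<dots> = (\<integral>\<^sup>+x5. \<integral>\<^sup>+x3. (Q x5 x3)^2 \<partial>M3 \<partial>M5) * ennreal (\<epsilon>/4)"
      by (rule nn_integral_multc) measurable
    also have "\<dots> \<le> ennreal C * ennreal (\<epsilon>/4)"
      by (intro mult_right_mono sqQ) simp
    also have "\<dots> = ennreal (C * \<epsilon> / 4)"
      using C1 eps by (simp add: ennreal_mult[symmetric])
    finally show ?thesis .
  qed
  have "H g12 g23 f34 f45 f51 \<le> H g12 f23 f34 f45 f51 + ennreal (K*T*\<epsilon>^4) + E1 + E2" by (rule main)
  also have "\<dots> \<le> H g12 f23 f34 f45 f51 + ennreal \<epsilon> + ennreal 0 + ennreal (C * \<epsilon> / 4)"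
    by (intro add_mono order.refl E2b) (simp_all add: KT E10)
  also have "\<dots> = H g12 f23 f34 f45 f51 + ennreal (\<epsilon> + 0 + C * \<epsilon> / 4)"
  proof -
    have h: "ennreal \<epsilon> + ennreal 0 + ennreal (C * \<epsilon> / 4) = ennreal (\<epsilon> + 0 + C * \<epsilon> / 4)"
      by (rule add3) (use eps C1 in auto)
    show ?thesis unfolding h[symmetric] by (simp only: add.assoc)
  qed
  finally show ?thesis .
qed


lemma st3: "H g12 g23 g34 f45 f51 \<le> H g12 g23 f34 f45 f51 + ennreal (\<epsilon>^2 + 0 + C * \<epsilon>^2 / 4)"
proof -
  interpret R1: five M2 M3 M4 M5 M1 using P1 P2 P3 P4 P5 by (simp add: five_def)
  interpret R2: five M3 M4 M5 M1 M2 using P1 P2 P3 P4 P5 by (simp add: five_def)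
  define T where "T = 1 / \<epsilon>^2"
  have T: "0 < T" using eps by (auto simp: T_def)
  have KT: "1 * T * \<epsilon>^4 = \<epsilon>^2"
    using eps unfolding T_def by (simp add: field_simps power2_eq_square power4_eq_xxxx)
  have KT4: "1/(4*T) = \<epsilon>^2/4"
    using eps unfolding T_def by (simp add: field_simps power2_eq_square)
  define a where "a x1 x3 = (\<integral>\<^sup>+x2. ker g12 one_fn x1 x2 * ker g23 one_fn x2 x3 \<partial>M2)" for x1 x3
  define c where "c x1 x4 = (\<integral>\<^sup>+x5. ker f45 (indicator S4) x4 x5 * ker f51 (indicator R5) x5 x1 \<partial>M5)" for x1 x4
  have [measurable]: "case_prod a \<in> borel_measurable (M1 \<Otimes>\<^sub>M M3)" unfolding a_def by measurable
  have [measurable]: "case_prod c \<in> borel_measurable (M1 \<Otimes>\<^sub>M M4)" unfolding c_def by measurable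
  have eq: "H g12 g23 h f45 f51 = (\<integral>\<^sup>+x1. \<integral>\<^sup>+x3. \<integral>\<^sup>+x4. ker h one_fn x3 x4 * a x1 x3 * c x1 x4 \<partial>M4 \<partial>M3 \<partial>M1)"
    if [measurable]: "case_prod h \<in> borel_measurable (M3 \<Otimes>\<^sub>M M4)" for h
    unfolding H_def a_def c_def
    by (subst rot, measurable, subst R1.rot, measurable, rule R2.group, measurable)
  define E1 where "E1 = (\<integral>\<^sup>+x1. (\<integral>\<^sup>+x3. a x1 x3 - ennreal 1 \<partial>M3) * (\<integral>\<^sup>+x4. c x1 x4 \<partial>M4) \<partial>M1)"
  define E2 where "E2 = (\<integral>\<^sup>+x1. (\<integral>\<^sup>+x3. a x1 x3 \<partial>M3) * (\<integral>\<^sup>+x4. c x1 x4 - ennreal T \<partial>M4) \<partial>M1)"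
  have main: "H g12 g23 g34 f45 f51 \<le> H g12 g23 f34 f45 f51 + ennreal (1*T*\<epsilon>^4) + E1 + E2"
    unfolding eq[OF meas(6)] eq[OF meas(5)] E1_def E2_def
    by (rule step[OF P1 P3 P4 gp34]) (measurable, auto simp: one_fn_def T less_imp_le)
  have a1: "a x1 x3 \<le> ennreal 1" if x1: "x1 \<in> space M1" and x3: "x3 \<in> space M3" for x1 x3
  proof -
    have "a x1 x3 \<le> (\<integral>\<^sup>+x2. 1 \<partial>M2)"
      unfolding a_def ker_def one_fn_def
    proof (intro nn_integral_mono)
      fix x2 assume x2: "x2 \<in> space M2"
      have "ennreal (g12 x1 x2) \<le> 1" "ennreal (g23 x2 x3) \<le> 1" using bnd12[OF x1 x2] bnd23[OF x2 x3] by auto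
      then have "ennreal (g12 x1 x2) * ennreal (g23 x2 x3) \<le> 1 * 1" by (intro mult_mono) auto
      then show "ennreal (g12 x1 x2) * 1 * (ennreal (g23 x2 x3) * 1) \<le> 1" by simp
    qed
    then show ?thesis by (simp add: A2.emeasure_space_1)
  qed
  have E10: "E1 = 0"
  proof -
    have "E1 = (\<integral>\<^sup>+x1. (\<integral>\<^sup>+x3. 0 \<partial>M3) * (\<integral>\<^sup>+x4. c x1 x4 \<partial>M4) \<partial>M1)"
      unfolding E1_def
      by (intro nn_integral_cong arg_cong2[where f="(*)"] refl) (simp add: a1 le_minus0 del: ennreal_1)
    then show ?thesis by simp
  qed
  have cB: "c x1 x4 \<le> B x4 x1" if "x1 \<in> space M1" "x4 \<in> space M4" for x1 x4
    unfolding c_def B_def ker_def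
    by (intro nn_integral_mono) (auto split: split_indicator)
  have E2b: "E2 \<le> ennreal (C * \<epsilon>^2 / 4)"
  proof -
    have "E2 \<le> (\<integral>\<^sup>+x1. (\<integral>\<^sup>+x4. (B x4 x1)^2 \<partial>M4) * ennreal (\<epsilon>^2/4) \<partial>M1)"
      unfolding E2_def
    proof (intro nn_integral_mono)
      fix x1 assume x1: "x1 \<in> space M1"
      have 1: "(\<integral>\<^sup>+x3. a x1 x3 \<partial>M3) \<le> 1"
      proof -
        have "(\<integral>\<^sup>+x3. a x1 x3 \<partial>M3) \<le> (\<integral>\<^sup>+x3. ennreal 1 \<partial>M3)"
          by (intro nn_integral_mono a1 x1)
        then show ?thesis by (simp add: A3.emeasure_space_1)
      qed
      have "(\<integral>\<^sup>+x4. c x1 x4 - ennreal T \<partial>M4) \<le> (\<integral>\<^sup>+x4. (B x4 x1)^2 * ennreal (1/(4*T)) \<partial>M4)"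
        by (intro nn_integral_mono order.trans[OF _ sq_excess[OF T]] ennreal_minus_mono cB x1) auto
      also have "\<dots> = (\<integral>\<^sup>+x4. (B x4 x1)^2 \<partial>M4) * ennreal (1/(4*T))"
        by (rule nn_integral_multc) (use x1 in measurable)
      finally have 2: "(\<integral>\<^sup>+x4. c x1 x4 - ennreal T \<partial>M4) \<le> (\<integral>\<^sup>+x4. (B x4 x1)^2 \<partial>M4) * ennreal (1/(4*T))" .
      have "(\<integral>\<^sup>+x3. a x1 x3 \<partial>M3) * (\<integral>\<^sup>+x4. c x1 x4 - ennreal T \<partial>M4)
          \<le> 1 * ((\<integral>\<^sup>+x4. (B x4 x1)^2 \<partial>M4) * ennreal (1/(4*T)))"
        by (intro mult_mono 1 2) auto
      also have "\<dots> = (\<integral>\<^sup>+x4. (B x4 x1)^2 \<partial>M4) * ennreal (\<epsilon>^2/4)"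
        by (simp only: KT4 mult_1)
      finally show "(\<integral>\<^sup>+x3. a x1 x3 \<partial>M3) * (\<integral>\<^sup>+x4. c x1 x4 - ennreal T \<partial>M4)
          \<le> (\<integral>\<^sup>+x4. (B x4 x1)^2 \<partial>M4) * ennreal (\<epsilon>^2/4)" .
    qed
    also have "\<dots> = (\<integral>\<^sup>+x1. \<integral>\<^sup>+x4. (B x4 x1)^2 \<partial>M4 \<partial>M1) * ennreal (\<epsilon>^2/4)"
      by (rule nn_integral_multc) measurable
    also have "\<dots> \<le> ennreal C * ennreal (\<epsilon>^2/4)"
      by (intro mult_right_mono sqB') simp
    also have "\<dots> = ennreal (C * \<epsilon>^2 / 4)"
      using C1 eps by (simp add: ennreal_mult[symmetric])
    finally show ?thesis .
  qed
  have "H g12 g23 g34 f45 f51 \<le> H g12 g23 f34 f45 f51 + ennreal (1*T*\<epsilon>^4) + E1 + E2" by (rule main)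
  also have "\<dots> \<le> H g12 g23 f34 f45 f51 + ennreal (\<epsilon>^2) + ennreal 0 + ennreal (C * \<epsilon>^2 / 4)"
    by (intro add_mono order.refl E2b) (simp_all only: KT E10 ennreal_0)
  also have "\<dots> = H g12 g23 f34 f45 f51 + ennreal (\<epsilon>^2 + 0 + C * \<epsilon>^2 / 4)"
  proof -
    have h: "ennreal (\<epsilon>^2) + ennreal 0 + ennreal (C * \<epsilon>^2 / 4) = ennreal (\<epsilon>^2 + 0 + C * \<epsilon>^2 / 4)"
      by (rule add3) (use eps C1 in auto)
    show ?thesis unfolding h[symmetric] by (simp only: add.assoc)
  qed
  finally show ?thesis .
qed

lemma st4: "H g12 g23 g34 g45 f51 \<le> H g12 g23 g34 f45 f51 + ennreal (\<epsilon>^3)"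
proof -
  interpret R1: five M2 M3 M4 M5 M1 using P1 P2 P3 P4 P5 by (simp add: five_def)
  interpret R2: five M3 M4 M5 M1 M2 using P1 P2 P3 P4 P5 by (simp add: five_def)
  interpret R3: five M4 M5 M1 M2 M3 using P1 P2 P3 P4 P5 by (simp add: five_def)
  define K where "K = 1 / \<epsilon>"
  have K: "0 < K" using eps by (auto simp: K_def)
  have KT: "1 * K * \<epsilon>^4 = \<epsilon>^3"
    using eps unfolding K_def by (simp add: field_simps power3_eq_cube power4_eq_xxxx)
  define a where "a x2 x4 = (\<integral>\<^sup>+x3. ker g23 one_fn x2 x3 * ker g34 one_fn x3 x4 \<partial>M3)" for x2 x4
  define c where "c x2 x5 = (\<integral>\<^sup>+x1. ker f51 (indicator R5) x5 x1 * ker g12 one_fn x1 x2 \<partial>M1)" for x2 x5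
  have [measurable]: "case_prod a \<in> borel_measurable (M2 \<Otimes>\<^sub>M M4)" unfolding a_def by measurable
  have [measurable]: "case_prod c \<in> borel_measurable (M2 \<Otimes>\<^sub>M M5)" unfolding c_def by measurable
  have eq: "H g12 g23 g34 h f51 = (\<integral>\<^sup>+x2. \<integral>\<^sup>+x4. \<integral>\<^sup>+x5. ker h (indicator S4) x4 x5 * a x2 x4 * c x2 x5 \<partial>M5 \<partial>M4 \<partial>M2)"
    if [measurable]: "case_prod h \<in> borel_measurable (M4 \<Otimes>\<^sub>M M5)" for h
    unfolding H_def a_def c_def
    by (subst rot, measurable, subst R1.rot, measurable, subst R2.rot, measurable, rule R3.group, measurable)
  define E1 where "E1 = (\<integral>\<^sup>+x2. (\<integral>\<^sup>+x4. a x2 x4 - ennreal 1 \<partial>M4) * (\<integral>\<^sup>+x5. c x2 x5 \<partial>M5) \<partial>M2)"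
  define E2 where "E2 = (\<integral>\<^sup>+x2. (\<integral>\<^sup>+x4. a x2 x4 \<partial>M4) * (\<integral>\<^sup>+x5. c x2 x5 - ennreal K \<partial>M5) \<partial>M2)"
  have main: "H g12 g23 g34 g45 f51 \<le> H g12 g23 g34 f45 f51 + ennreal (1*K*\<epsilon>^4) + E1 + E2"
    unfolding eq[OF meas(8)] eq[OF meas(7)] E1_def E2_def
    by (rule step[OF P2 P4 P5 gp45]) (measurable, auto simp: K less_imp_le split: split_indicator)
  have a1: "a x2 x4 \<le> ennreal 1" if x2: "x2 \<in> space M2" and x4: "x4 \<in> space M4" for x2 x4
  proof -
    have "a x2 x4 \<le> (\<integral>\<^sup>+x3. 1 \<partial>M3)"
      unfolding a_def ker_def one_fn_def
    proof (intro nn_integral_mono)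
      fix x3 assume x3: "x3 \<in> space M3"
      have "ennreal (g23 x2 x3) \<le> 1" "ennreal (g34 x3 x4) \<le> 1" using bnd23[OF x2 x3] bnd34[OF x3 x4] by auto
      then have "ennreal (g23 x2 x3) * ennreal (g34 x3 x4) \<le> 1 * 1" by (intro mult_mono) auto
      then show "ennreal (g23 x2 x3) * 1 * (ennreal (g34 x3 x4) * 1) \<le> 1" by simp
    qed
    then show ?thesis by (simp add: A3.emeasure_space_1)
  qed
  have cK: "c x2 x5 \<le> ennreal K" if x2: "x2 \<in> space M2" and x5: "x5 \<in> space M5" for x2 x5
  proof -
    have "c x2 x5 \<le> (\<integral>\<^sup>+x1. indicator R5 x5 * ennreal (f51 x5 x1) \<partial>M1)"
      unfolding c_def ker_def one_fn_def
    proof (intro nn_integral_mono)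
      fix x1 assume x1: "x1 \<in> space M1"
      have "ennreal (g12 x1 x2) \<le> 1" using bnd12[OF x1 x2] by simp
      then have "ennreal (f51 x5 x1) * indicator R5 x5 * (ennreal (g12 x1 x2) * 1)
          \<le> ennreal (f51 x5 x1) * indicator R5 x5 * 1"
        by (intro mult_left_mono) auto
      then show "ennreal (f51 x5 x1) * indicator R5 x5 * (ennreal (g12 x1 x2) * 1)
          \<le> indicator R5 x5 * ennreal (f51 x5 x1)" by (simp add: ac_simps)
    qed
    also have "\<dots> = indicator R5 x5 * (\<integral>\<^sup>+x1. ennreal (f51 x5 x1) \<partial>M1)"
      by (rule nn_integral_cmult) (use x5 in measurable)
    also have "\<dots> \<le> ennreal K"
      by (cases "x5 \<in> R5") (auto simp: R5_def K_def)
    finally show ?thesis .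
  qed
  have E10: "E1 = 0"
  proof -
    have "E1 = (\<integral>\<^sup>+x2. (\<integral>\<^sup>+x4. 0 \<partial>M4) * (\<integral>\<^sup>+x5. c x2 x5 \<partial>M5) \<partial>M2)"
      unfolding E1_def
      by (intro nn_integral_cong arg_cong2[where f="(*)"] refl) (simp add: a1 le_minus0 del: ennreal_1)
    then show ?thesis by simp
  qed
  have E20: "E2 = 0"
  proof -
    have "E2 = (\<integral>\<^sup>+x2. (\<integral>\<^sup>+x4. a x2 x4 \<partial>M4) * (\<integral>\<^sup>+x5. 0 \<partial>M5) \<partial>M2)"
      unfolding E2_def
      by (intro nn_integral_cong arg_cong2[where f="(*)"] refl) (simp add: cK le_minus0)
    then show ?thesis by simp
  qed
  show ?thesis using main by (simp only: KT E10 E20 add_0_right)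
qed

lemma st5: "H g12 g23 g34 g45 g51 \<le> H g12 g23 g34 g45 f51 + ennreal (\<epsilon>^4)"
proof -
  interpret R1: five M2 M3 M4 M5 M1 using P1 P2 P3 P4 P5 by (simp add: five_def)
  interpret R2: five M3 M4 M5 M1 M2 using P1 P2 P3 P4 P5 by (simp add: five_def)
  interpret R3: five M4 M5 M1 M2 M3 using P1 P2 P3 P4 P5 by (simp add: five_def)
  interpret R4: five M5 M1 M2 M3 M4 using P1 P2 P3 P4 P5 by (simp add: five_def)
  define a where "a x3 x5 = (\<integral>\<^sup>+x4. ker g34 one_fn x3 x4 * ker g45 (indicator S4) x4 x5 \<partial>M4)" for x3 x5
  define c where "c x3 x1 = (\<integral>\<^sup>+x2. ker g12 one_fn x1 x2 * ker g23 one_fn x2 x3 \<partial>M2)" for x3 x1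
  have [measurable]: "case_prod a \<in> borel_measurable (M3 \<Otimes>\<^sub>M M5)" unfolding a_def by measurable
  have [measurable]: "case_prod c \<in> borel_measurable (M3 \<Otimes>\<^sub>M M1)" unfolding c_def by measurable
  have eq: "H g12 g23 g34 g45 h = (\<integral>\<^sup>+x3. \<integral>\<^sup>+x5. \<integral>\<^sup>+x1. ker h (indicator R5) x5 x1 * a x3 x5 * c x3 x1 \<partial>M1 \<partial>M5 \<partial>M3)"
    if [measurable]: "case_prod h \<in> borel_measurable (M5 \<Otimes>\<^sub>M M1)" for h
    unfolding H_def a_def c_def
    by (subst rot, measurable, subst R1.rot, measurable, subst R2.rot, measurable, subst R3.rot, measurable,
        rule R4.group, measurable)
  define E1 where "E1 = (\<integral>\<^sup>+x3. (\<integral>\<^sup>+x5. a x3 x5 - ennreal 1 \<partial>M5) * (\<integral>\<^sup>+x1. c x3 x1 \<partial>M1) \<partial>M3)"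
  define E2 where "E2 = (\<integral>\<^sup>+x3. (\<integral>\<^sup>+x5. a x3 x5 \<partial>M5) * (\<integral>\<^sup>+x1. c x3 x1 - ennreal 1 \<partial>M1) \<partial>M3)"
  have main: "H g12 g23 g34 g45 g51 \<le> H g12 g23 g34 g45 f51 + ennreal (1*1*\<epsilon>^4) + E1 + E2"
    unfolding eq[OF meas(10)] eq[OF meas(9)] E1_def E2_def
    by (rule step[OF P3 P5 P1 gp51]) (measurable, auto split: split_indicator)
  have a1: "a x3 x5 \<le> ennreal 1" if x3: "x3 \<in> space M3" and x5: "x5 \<in> space M5" for x3 x5
  proof -
    have "a x3 x5 \<le> (\<integral>\<^sup>+x4. 1 \<partial>M4)"
      unfolding a_def ker_def one_fn_def
    proof (intro nn_integral_mono)
      fix x4 assume x4: "x4 \<in> space M4"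
      have "ennreal (g34 x3 x4) \<le> 1" "ennreal (g45 x4 x5) * indicator S4 x4 \<le> 1"
        using bnd34[OF x3 x4] bnd45[OF x4 x5] by (auto split: split_indicator)
      then have "ennreal (g34 x3 x4) * (ennreal (g45 x4 x5) * indicator S4 x4) \<le> 1 * 1" by (intro mult_mono) auto
      then show "ennreal (g34 x3 x4) * 1 * (ennreal (g45 x4 x5) * indicator S4 x4) \<le> 1" by simp
    qed
    then show ?thesis by (simp add: A4.emeasure_space_1)
  qed
  have c1: "c x3 x1 \<le> ennreal 1" if x3: "x3 \<in> space M3" and x1: "x1 \<in> space M1" for x3 x1
  proof -
    have "c x3 x1 \<le> (\<integral>\<^sup>+x2. 1 \<partial>M2)"
      unfolding c_def ker_def one_fn_def
    proof (intro nn_integral_mono)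
      fix x2 assume x2: "x2 \<in> space M2"
      have "ennreal (g12 x1 x2) \<le> 1" "ennreal (g23 x2 x3) \<le> 1" using bnd12[OF x1 x2] bnd23[OF x2 x3] by auto
      then have "ennreal (g12 x1 x2) * ennreal (g23 x2 x3) \<le> 1 * 1" by (intro mult_mono) auto
      then show "ennreal (g12 x1 x2) * 1 * (ennreal (g23 x2 x3) * 1) \<le> 1" by simp
    qed
    then show ?thesis by (simp add: A2.emeasure_space_1)
  qed
  have E10: "E1 = 0"
  proof -
    have "E1 = (\<integral>\<^sup>+x3. (\<integral>\<^sup>+x5. 0 \<partial>M5) * (\<integral>\<^sup>+x1. c x3 x1 \<partial>M1) \<partial>M3)"
      unfolding E1_def
      by (intro nn_integral_cong arg_cong2[where f="(*)"] refl) (simp add: a1 le_minus0 del: ennreal_1)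
    then show ?thesis by simp
  qed
  have E20: "E2 = 0"
  proof -
    have "E2 = (\<integral>\<^sup>+x3. (\<integral>\<^sup>+x5. a x3 x5 \<partial>M5) * (\<integral>\<^sup>+x1. 0 \<partial>M1) \<partial>M3)"
      unfolding E2_def
      by (intro nn_integral_cong arg_cong2[where f="(*)"] refl) (simp add: c1 le_minus0 del: ennreal_1)
    then show ?thesis by simp
  qed
  show ?thesis using main by (simp only: E10 E20 add_0_right mult_1)
qed

lemma F_side: "H f12 f23 f34 f45 f51 \<le> (\<integral>\<^sup>+ x1. \<integral>\<^sup>+ x2. \<integral>\<^sup>+ x3. \<integral>\<^sup>+ x4. \<integral>\<^sup>+ x5.
            ennreal (f12 x1 x2 * f23 x2 x3 * f34 x3 x4 * f45 x4 x5 * f51 x5 x1)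
            \<partial>M5 \<partial>M4 \<partial>M3 \<partial>M2 \<partial>M1)"
  unfolding H_def cyc_def
proof (intro nn_integral_mono)
  fix x1 x2 x3 x4 x5 assume x: "x1 \<in> space M1" "x2 \<in> space M2" "x3 \<in> space M3" "x4 \<in> space M4" "x5 \<in> space M5"
  have e: "ennreal (f12 x1 x2 * f23 x2 x3 * f34 x3 x4 * f45 x4 x5 * f51 x5 x1)
      = ennreal (f12 x1 x2) * ennreal (f23 x2 x3) * ennreal (f34 x3 x4) * ennreal (f45 x4 x5) * ennreal (f51 x5 x1)"
    using bnd12[OF x(1,2)] bnd23[OF x(2,3)] bnd34[OF x(3,4)] bnd45[OF x(4,5)] bnd51[OF x(5,1)]
    by (simp add: ennreal_mult)
  have "ker f12 one_fn x1 x2 * ker f23 one_fn x2 x3 * ker f34 one_fn x3 x4 * ker f45 (indicator S4) x4 x5 *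
      ker f51 (indicator R5) x5 x1 = (ennreal (f12 x1 x2) * ennreal (f23 x2 x3) * ennreal (f34 x3 x4) * ennreal (f45 x4 x5) * ennreal (f51 x5 x1))
      * (indicator S4 x4 * indicator R5 x5)"
    unfolding ker_def one_fn_def by (simp add: ac_simps)
  also have "\<dots> \<le> (ennreal (f12 x1 x2) * ennreal (f23 x2 x3) * ennreal (f34 x3 x4) * ennreal (f45 x4 x5) * ennreal (f51 x5 x1)) * 1"
    by (intro mult_left_mono) (auto split: split_indicator)
  finally show "ker f12 one_fn x1 x2 * ker f23 one_fn x2 x3 * ker f34 one_fn x3 x4 * ker f45 (indicator S4) x4 x5 *
      ker f51 (indicator R5) x5 x1 \<le> ennreal (f12 x1 x2 * f23 x2 x3 * f34 x3 x4 * f45 x4 x5 * f51 x5 x1)"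
    unfolding e by simp
qed

lemma int_c:
  assumes PM: "prob_space M" and [measurable]: "u \<in> borel_measurable M"
  shows "(\<integral>\<^sup>+x. u x + c \<partial>M) = (\<integral>\<^sup>+x. u x \<partial>M) + c"
proof -
  have "(\<integral>\<^sup>+x. u x + c \<partial>M) = (\<integral>\<^sup>+x. u x \<partial>M) + (\<integral>\<^sup>+x. c \<partial>M)"
    by (rule nn_integral_add) measurable
  also have "(\<integral>\<^sup>+x. c \<partial>M) = c" using prob_space.emeasure_space_1[OF PM] by simp
  finally show ?thesis .
qed

lemma int_ind:
  assumes PM: "prob_space M" and [measurable]: "u \<in> borel_measurable M" "A \<in> sets M"
  shows "(\<integral>\<^sup>+x. u x + indicator A x + c \<partial>M) = (\<integral>\<^sup>+x. u x \<partial>M) + emeasure M A + c"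
proof -
  have "(\<integral>\<^sup>+x. u x + indicator A x + c \<partial>M) = (\<integral>\<^sup>+x. u x + indicator A x \<partial>M) + c"
    by (rule int_c[OF PM]) measurable
  also have "(\<integral>\<^sup>+x. u x + indicator A x \<partial>M) = (\<integral>\<^sup>+x. u x \<partial>M) + (\<integral>\<^sup>+x. indicator A x \<partial>M)"
    by (rule nn_integral_add) measurable
  also have "(\<integral>\<^sup>+x. indicator A x \<partial>M) = emeasure M A" by simp
  finally show ?thesis .
qed

lemma int_ind':
  assumes PM: "prob_space M" and [measurable]: "u \<in> borel_measurable M" "A \<in> sets M"
  shows "(\<integral>\<^sup>+x. u x + c + indicator A x \<partial>M) = (\<integral>\<^sup>+x. u x \<partial>M) + c + emeasure M A"
proof -
  have "(\<integral>\<^sup>+x. u x + c + indicator A x \<partial>M) = (\<integral>\<^sup>+x. u x + indicator A x + c \<partial>M)"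
    by (simp only: ac_simps)
  also have "\<dots> = (\<integral>\<^sup>+x. u x \<partial>M) + emeasure M A + c" by (rule int_ind[OF PM]) measurable
  finally show ?thesis by (simp only: ac_simps)
qed

lemma G_side: "(\<integral>\<^sup>+ x1. \<integral>\<^sup>+ x2. \<integral>\<^sup>+ x3. \<integral>\<^sup>+ x4. \<integral>\<^sup>+ x5.
            ennreal (g12 x1 x2 * g23 x2 x3 * g34 x3 x4 * g45 x4 x5 * g51 x5 x1)
            \<partial>M5 \<partial>M4 \<partial>M3 \<partial>M2 \<partial>M1)
   \<le> H g12 g23 g34 g45 g51 + emeasure M5 (space M5 - R5) + emeasure M4 (space M4 - S4)"
proof -
  define X where "X x1 x2 x3 x4 x5 = ker g12 one_fn x1 x2 * ker g23 one_fn x2 x3 * ker g34 one_fn x3 x4 *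
    ker g45 (indicator S4) x4 x5 * ker g51 (indicator R5) x5 x1" for x1 x2 x3 x4 x5
  define m5 where "m5 = emeasure M5 (space M5 - R5)"
  define m4 where "m4 = emeasure M4 (space M4 - S4)"
  have [measurable]: "space M5 - R5 \<in> sets M5" by (intro sets.Diff sets.top measR5)
  have [measurable]: "space M4 - S4 \<in> sets M4" by (intro sets.Diff sets.top measS4)
  have "(\<integral>\<^sup>+ x1. \<integral>\<^sup>+ x2. \<integral>\<^sup>+ x3. \<integral>\<^sup>+ x4. \<integral>\<^sup>+ x5.
            ennreal (g12 x1 x2 * g23 x2 x3 * g34 x3 x4 * g45 x4 x5 * g51 x5 x1)
            \<partial>M5 \<partial>M4 \<partial>M3 \<partial>M2 \<partial>M1)
    \<le> (\<integral>\<^sup>+ x1. \<integral>\<^sup>+ x2. \<integral>\<^sup>+ x3. \<integral>\<^sup>+ x4. \<integral>\<^sup>+ x5.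
            X x1 x2 x3 x4 x5 + indicator (space M5 - R5) x5 + indicator (space M4 - S4) x4
            \<partial>M5 \<partial>M4 \<partial>M3 \<partial>M2 \<partial>M1)"
  proof (intro nn_integral_mono)
    fix x1 x2 x3 x4 x5 assume x: "x1 \<in> space M1" "x2 \<in> space M2" "x3 \<in> space M3" "x4 \<in> space M4" "x5 \<in> space M5"
    note b = bnd12[OF x(1,2)] bnd23[OF x(2,3)] bnd34[OF x(3,4)] bnd45[OF x(4,5)] bnd51[OF x(5,1)]
    have e: "ennreal (g12 x1 x2 * g23 x2 x3 * g34 x3 x4 * g45 x4 x5 * g51 x5 x1)
      = ennreal (g12 x1 x2) * ennreal (g23 x2 x3) * ennreal (g34 x3 x4) * ennreal (g45 x4 x5) * ennreal (g51 x5 x1)"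
      using b by (simp add: ennreal_mult)
    have le1: "g12 x1 x2 * g23 x2 x3 * g34 x3 x4 * g45 x4 x5 * g51 x5 x1 \<le> 1"
      using b by (intro mult_le_one) (auto intro!: mult_nonneg_nonneg)
    show "ennreal (g12 x1 x2 * g23 x2 x3 * g34 x3 x4 * g45 x4 x5 * g51 x5 x1)
        \<le> X x1 x2 x3 x4 x5 + indicator (space M5 - R5) x5 + indicator (space M4 - S4) x4"
    proof (cases "x4 \<in> S4 \<and> x5 \<in> R5")
      case True
      then have "X x1 x2 x3 x4 x5 = ennreal (g12 x1 x2 * g23 x2 x3 * g34 x3 x4 * g45 x4 x5 * g51 x5 x1)"
        unfolding X_def ker_def one_fn_def e by simp
      then show ?thesis by simp
    next
      case False
      then have "1 \<le> indicator (space M5 - R5) x5 + (indicator (space M4 - S4) x4 :: ennreal)"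
        using x by (auto split: split_indicator)
      moreover have "ennreal (g12 x1 x2 * g23 x2 x3 * g34 x3 x4 * g45 x4 x5 * g51 x5 x1) \<le> 1"
        using le1 by simp
      ultimately have "ennreal (g12 x1 x2 * g23 x2 x3 * g34 x3 x4 * g45 x4 x5 * g51 x5 x1)
          \<le> indicator (space M5 - R5) x5 + indicator (space M4 - S4) x4" by (rule order.trans[rotated])
      also have "\<dots> \<le> X x1 x2 x3 x4 x5 + (indicator (space M5 - R5) x5 + indicator (space M4 - S4) x4)"
        by (rule add_increasing) auto
      finally show ?thesis by (simp only: add.assoc)
    qed
  qed
  also have "\<dots> = (\<integral>\<^sup>+ x1. \<integral>\<^sup>+ x2. \<integral>\<^sup>+ x3. \<integral>\<^sup>+ x4.
            (\<integral>\<^sup>+ x5. X x1 x2 x3 x4 x5 \<partial>M5) + m5 + indicator (space M4 - S4) x4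
            \<partial>M4 \<partial>M3 \<partial>M2 \<partial>M1)"
    unfolding m5_def X_def by (intro nn_integral_cong int_ind[OF P5]) measurable
  also have "\<dots> = (\<integral>\<^sup>+ x1. \<integral>\<^sup>+ x2. \<integral>\<^sup>+ x3.
            (\<integral>\<^sup>+ x4. \<integral>\<^sup>+ x5. X x1 x2 x3 x4 x5 \<partial>M5 \<partial>M4) + m5 + m4
            \<partial>M3 \<partial>M2 \<partial>M1)"
    unfolding m4_def X_def by (intro nn_integral_cong int_ind'[OF P4]) measurable
  also have "\<dots> = (\<integral>\<^sup>+ x1. \<integral>\<^sup>+ x2.
            (\<integral>\<^sup>+ x3. \<integral>\<^sup>+ x4. \<integral>\<^sup>+ x5. X x1 x2 x3 x4 x5 \<partial>M5 \<partial>M4 \<partial>M3) + (m5 + m4)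
            \<partial>M2 \<partial>M1)"
    unfolding X_def by (simp only: add.assoc, intro nn_integral_cong int_c[OF P3]) measurable
  also have "\<dots> = (\<integral>\<^sup>+ x1.
            (\<integral>\<^sup>+ x2. \<integral>\<^sup>+ x3. \<integral>\<^sup>+ x4. \<integral>\<^sup>+ x5. X x1 x2 x3 x4 x5 \<partial>M5 \<partial>M4 \<partial>M3 \<partial>M2) + (m5 + m4)
            \<partial>M1)"
    unfolding X_def by (intro nn_integral_cong int_c[OF P2]) measurable
  also have "\<dots> = (\<integral>\<^sup>+ x1. \<integral>\<^sup>+ x2. \<integral>\<^sup>+ x3. \<integral>\<^sup>+ x4. \<integral>\<^sup>+ x5. X x1 x2 x3 x4 x5 \<partial>M5 \<partial>M4 \<partial>M3 \<partial>M2 \<partial>M1) + (m5 + m4)"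
    unfolding X_def by (intro int_c[OF P1]) measurable
  also have "\<dots> = H g12 g23 g34 g45 g51 + m5 + m4"
    unfolding H_def cyc_def X_def by (simp only: add.assoc)
  finally show ?thesis unfolding m5_def m4_def .
qed

lemma final:
  "enn2ereal (\<integral>\<^sup>+ x1. \<integral>\<^sup>+ x2. \<integral>\<^sup>+ x3. \<integral>\<^sup>+ x4. \<integral>\<^sup>+ x5.
            ennreal (g12 x1 x2 * g23 x2 x3 * g34 x3 x4 * g45 x4 x5 * g51 x5 x1)
            \<partial>M5 \<partial>M4 \<partial>M3 \<partial>M2 \<partial>M1) - ereal (11 * C * \<epsilon>)
         \<le> enn2ereal (\<integral>\<^sup>+ x1. \<integral>\<^sup>+ x2. \<integral>\<^sup>+ x3. \<integral>\<^sup>+ x4. \<integral>\<^sup>+ x5.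
            ennreal (f12 x1 x2 * f23 x2 x3 * f34 x3 x4 * f45 x4 x5 * f51 x5 x1)
            \<partial>M5 \<partial>M4 \<partial>M3 \<partial>M2 \<partial>M1)"
  (is "enn2ereal ?G - _ \<le> enn2ereal ?F")
proof -
  define c1 where "c1 = \<epsilon> + C * \<epsilon> / 4 + C * \<epsilon> / 4"
  define c2 where "c2 = \<epsilon> + 0 + C * \<epsilon> / 4"
  define c3 where "c3 = \<epsilon>^2 + 0 + C * \<epsilon>^2 / 4"
  have "?G \<le> H g12 g23 g34 g45 g51 + emeasure M5 (space M5 - R5) + emeasure M4 (space M4 - S4)"
    by (rule G_side)
  also have "\<dots> \<le> H g12 g23 g34 g45 g51 + ennreal (2 * \<epsilon>) + ennreal (2 * C * \<epsilon>)"
    by (intro add_mono order.refl mR5 mS4)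
  also have "H g12 g23 g34 g45 g51 \<le> H g12 g23 g34 g45 f51 + ennreal (\<epsilon>^4)" by (rule st5)
  also have "H g12 g23 g34 g45 f51 \<le> H g12 g23 g34 f45 f51 + ennreal (\<epsilon>^3)" by (rule st4)
  also have "H g12 g23 g34 f45 f51 \<le> H g12 g23 f34 f45 f51 + ennreal c3" unfolding c3_def by (rule st3)
  also have "H g12 g23 f34 f45 f51 \<le> H g12 f23 f34 f45 f51 + ennreal c2" unfolding c2_def by (rule st2)
  also have "H g12 f23 f34 f45 f51 \<le> H f12 f23 f34 f45 f51 + ennreal c1" unfolding c1_def by (rule st1)
  also have "H f12 f23 f34 f45 f51 \<le> ?F" by (rule F_side)
  finally have le: "?G \<le> ?F + ennreal c1 + ennreal c2 + ennreal c3 + ennreal (\<epsilon>^3) + ennreal (\<epsilon>^4)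
       + ennreal (2 * \<epsilon>) + ennreal (2 * C * \<epsilon>)"
    by (simp add: add_mono add_right_mono)
  have pos: "0 \<le> c1" "0 \<le> c2" "0 \<le> c3" using eps C1 by (auto simp: c1_def c2_def c3_def)
  have "enn2ereal ?G \<le> enn2ereal (?F + ennreal c1 + ennreal c2 + ennreal c3 + ennreal (\<epsilon>^3) + ennreal (\<epsilon>^4)
       + ennreal (2 * \<epsilon>) + ennreal (2 * C * \<epsilon>))"
    using le by (simp add: less_eq_ennreal.rep_eq)
  also have "\<dots> = enn2ereal ?F + (ereal c1 + ereal c2 + ereal c3 + ereal (\<epsilon>^3) + ereal (\<epsilon>^4)
       + ereal (2 * \<epsilon>) + ereal (2 * C * \<epsilon>))"
    using pos eps C1 by (simp add: plus_ennreal.rep_eq add.assoc)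
  also have "\<dots> \<le> enn2ereal ?F + ereal (11 * C * \<epsilon>)"
  proof (intro add_left_mono)
    have e2: "\<epsilon>^2 \<le> \<epsilon>" "\<epsilon>^3 \<le> \<epsilon>" "\<epsilon>^4 \<le> \<epsilon>"
      using power_decreasing[of 1 2 \<epsilon>] power_decreasing[of 1 3 \<epsilon>] power_decreasing[of 1 4 \<epsilon>] eps by auto
    have e3: "\<epsilon> \<le> C * \<epsilon>" "C * \<epsilon>^2 \<le> C * \<epsilon>" using eps C1 e2(1) by (auto intro: mult_left_mono)
    have "c1 + c2 + c3 + \<epsilon>^3 + \<epsilon>^4 + 2 * \<epsilon> + 2 * C * \<epsilon> \<le> 11 * C * \<epsilon>"
    proof -
      define P where "P = C * \<epsilon>"
      define Q where "Q = C * \<epsilon>^2"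
      have A: "c1 = \<epsilon> + P/2" "c2 = \<epsilon> + P/4" "c3 = \<epsilon>^2 + Q/4" "2 * C * \<epsilon> = 2 * P" "11 * C * \<epsilon> = 11 * P"
        unfolding c1_def c2_def c3_def P_def Q_def by simp_all
      have "\<epsilon> \<le> P" "Q \<le> P" using e3 unfolding P_def Q_def by auto
      then show ?thesis unfolding A using e2 eps by linarith
    qed
    then show "ereal c1 + ereal c2 + ereal c3 + ereal (\<epsilon>^3) + ereal (\<epsilon>^4)
       + ereal (2 * \<epsilon>) + ereal (2 * C * \<epsilon>) \<le> ereal (11 * C * \<epsilon>)" by simp
  qed
  finally show ?thesis by (simp add: ereal_minus_le)
qed
end

theorem theorem3p2:
  fixes M1 :: "'a measure" and M2 :: "'b measure" and M3 :: "'c measure"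
    and M4 :: "'d measure" and M5 :: "'e measure"
    and f12 g12 :: "'a \<Rightarrow> 'b \<Rightarrow> real" and f23 g23 :: "'b \<Rightarrow> 'c \<Rightarrow> real"
    and f34 g34 :: "'c \<Rightarrow> 'd \<Rightarrow> real" and f45 g45 :: "'d \<Rightarrow> 'e \<Rightarrow> real"
    and f51 g51 :: "'e \<Rightarrow> 'a \<Rightarrow> real"
    and \<epsilon> C :: real
  assumes "0 < \<epsilon>" "\<epsilon> < 1" "1 \<le> C"
    and "prob_space M1" "prob_space M2" "prob_space M3" "prob_space M4" "prob_space M5"
    and "good_pair M1 M2 f12 g12 \<epsilon>" "good_pair M2 M3 f23 g23 \<epsilon>"
    and "good_pair M3 M4 f34 g34 \<epsilon>" "good_pair M4 M5 f45 g45 \<epsilon>"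
    and "good_pair M5 M1 f51 g51 \<epsilon>"
    and "comp_sq_norm M5 M1 M2 f51 f12 \<le> ennreal C"
    and "comp_sq_norm M1 M2 M3 f12 f23 \<le> ennreal C"
    and "comp_sq_norm M2 M3 M4 f23 f34 \<le> ennreal C"
    and "comp_sq_norm M3 M4 M5 f34 f45 \<le> ennreal C"
    and "comp_sq_norm M4 M5 M1 f45 f51 \<le> ennreal C"
  shows "enn2ereal (\<integral>\<^sup>+ x1. \<integral>\<^sup>+ x2. \<integral>\<^sup>+ x3. \<integral>\<^sup>+ x4. \<integral>\<^sup>+ x5.
            ennreal (g12 x1 x2 * g23 x2 x3 * g34 x3 x4 * g45 x4 x5 * g51 x5 x1)
            \<partial>M5 \<partial>M4 \<partial>M3 \<partial>M2 \<partial>M1) - ereal (11 * C * \<epsilon>)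
         \<le> enn2ereal (\<integral>\<^sup>+ x1. \<integral>\<^sup>+ x2. \<integral>\<^sup>+ x3. \<integral>\<^sup>+ x4. \<integral>\<^sup>+ x5.
            ennreal (f12 x1 x2 * f23 x2 x3 * f34 x3 x4 * f45 x4 x5 * f51 x5 x1)
            \<partial>M5 \<partial>M4 \<partial>M3 \<partial>M2 \<partial>M1)"
  proof -
  interpret main M1 M2 M3 M4 M5 f12 g12 f23 g23 f34 g34 f45 g45 f51 g51 \<epsilon> C
    using assms by (simp add: main_def main_axioms_def five_def)
  show ?thesis by (rule final)
qed

end
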